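(* In the construction described in the context, there exists $\ell=O(\log n)$ with the following property. If $p\ell<1$ and $p\delta\ge 32c$, then with high probability the connected components of $G_\ell$ are $c$-edge-connected and equal to the connected components of $H_\ell$.
   Context: **Setting.** Let $G=(V,E)$ be an undirected graph (parallel edges allowed, no self-loops) with $n$ vertices and $m$ edges $E=\{e_1,\dots,e_m\}$. Fix integers $c\ge1$, $\delta>c$, $\ell\ge1$ and a real $p\in(0,1)$, and let $s=\lceil pm\rceil$. For graphs on $V$, $\cup$ and $\cap$ act on edge sets. For $C\subseteq V$, $\partial_F(C)$ is the set of edges of $F$ with exactly one endpoint in $C$. A graph is $c$-edge-connected if it has no cut of size $<c$, and $c$-edge-connected components are maximal induced $c$-edge-connected subgraphs. **Sampling.** For $i=1,\dots,\ell$, $r_i:\{1,\dots,s\}\to\{1,\dots,m\}$ is a pairwise independent random function (values uniform, pairwise independent), and $r_1,\dots,r_\ell$ are mutually independent. Set $H_0^0=(V,\emptyset)$ and $H_i^0=H_{i-1}^0\cup(V,\{e_{r_i(1)},\dots,e_{r_i(s)}\})$. **Levels.** Set $G_{-1}=G$. For $i=0,\dots,\ell$: - $H_i$ is the subgraph of $H_i^0\cap G_{i-1}$ consisting of the edges inside its $c$-edge-connected components. - Starting from $G_i:=G_{i-1}$, while some connected component $C$ of $H_i$ satisfies $0<|\partial_{G_i}(C)|<\delta$, delete $\partial_{G_i}(C)$ from $G_i$ and $H_i$. "With high probability" means with probability $1-O(n^{-\gamma})$ for any chosen constant $\gamma$; the constant hidden in $\ell=O(\log n)$ may depend on $\gamma$.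 *)

theory Defs
  imports "HOL-Probability.Probability"
begin

text \<open>A multigraph on vertex set V (vertices are naturals) with edges indexed 1..m;
  ep e = (u, v) gives the two endpoints of edge e. Subgraphs on V are sets of edge indices.\<close>

definition boundary :: "(nat \<Rightarrow> nat \<times> nat) \<Rightarrow> nat set \<Rightarrow> nat set \<Rightarrow> nat set" where
  "boundary ep F C = {e \<in> F. (fst (ep e) \<in> C) \<noteq> (snd (ep e) \<in> C)}"

definition induced :: "(nat \<Rightarrow> nat \<times> nat) \<Rightarrow> nat set \<Rightarrow> nat set \<Rightarrow> nat set" where
  "induced ep F W = {e \<in> F. fst (ep e) \<in> W \<and> snd (ep e) \<in> W}"

definition edge_connected :: "(nat \<Rightarrow> nat \<times> nat) \<Rightarrow> nat \<Rightarrow> nat set \<Rightarrow> nat set \<Rightarrow> bool" where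
  "edge_connected ep c W F \<longleftrightarrow>
     (\<forall>C. C \<subseteq> W \<longrightarrow> C \<noteq> {} \<longrightarrow> C \<noteq> W \<longrightarrow> c \<le> card (boundary ep F C))"

definition ecc_components :: "(nat \<Rightarrow> nat \<times> nat) \<Rightarrow> nat \<Rightarrow> nat set \<Rightarrow> nat set \<Rightarrow> nat set set" where
  "ecc_components ep c V F =
     {W. W \<subseteq> V \<and> W \<noteq> {} \<and> edge_connected ep c W (induced ep F W) \<and>
         (\<forall>W'. W \<subseteq> W' \<and> W' \<subseteq> V \<and> edge_connected ep c W' (induced ep F W') \<longrightarrow> W' = W)}"

definition adj :: "(nat \<Rightarrow> nat \<times> nat) \<Rightarrow> nat set \<Rightarrow> nat \<Rightarrow> nat \<Rightarrow> bool" where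
  "adj ep F u v \<longleftrightarrow> (\<exists>e\<in>F. ep e = (u, v) \<or> ep e = (v, u))"

definition components :: "(nat \<Rightarrow> nat \<times> nat) \<Rightarrow> nat set \<Rightarrow> nat set \<Rightarrow> nat set set" where
  "components ep V F = (\<lambda>v. {u \<in> V. (adj ep F)\<^sup>*\<^sup>* v u}) ` V"

definition core_edges :: "(nat \<Rightarrow> nat \<times> nat) \<Rightarrow> nat \<Rightarrow> nat set \<Rightarrow> nat set \<Rightarrow> nat set" where
  "core_edges ep c V F =
     {e \<in> F. \<exists>W \<in> ecc_components ep c V F. fst (ep e) \<in> W \<and> snd (ep e) \<in> W}"

inductive peel_step :: "(nat \<Rightarrow> nat \<times> nat) \<Rightarrow> nat set \<Rightarrow> nat \<Rightarrow> nat set \<times> nat set \<Rightarrow> nat set \<times> nat set \<Rightarrow> bool"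
  for ep V \<delta> where
  "C \<in> components ep V H \<Longrightarrow> 0 < card (boundary ep G C) \<Longrightarrow> card (boundary ep G C) < \<delta> \<Longrightarrow>
   peel_step ep V \<delta> (G, H) (G - boundary ep G C, H - boundary ep G C)"

definition sampled :: "(nat \<Rightarrow> nat \<Rightarrow> nat) \<Rightarrow> nat \<Rightarrow> nat \<Rightarrow> nat set" where
  "sampled r s i = (\<Union>k\<in>{1..i}. r k ` {1..s})"

text \<open>Gs i, Hs i (i = 0..l) are the final G_i, H_i of some run of the construction
  with samples r (r i j = r_i(j)); G_{-1} = G = all edges {1..m}.\<close>
definition level_run :: "(nat \<Rightarrow> nat \<times> nat) \<Rightarrow> nat set \<Rightarrow> nat \<Rightarrow> nat \<Rightarrow> nat \<Rightarrow> nat \<Rightarrow> nat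
    \<Rightarrow> (nat \<Rightarrow> nat \<Rightarrow> nat) \<Rightarrow> (nat \<Rightarrow> nat set) \<Rightarrow> (nat \<Rightarrow> nat set) \<Rightarrow> bool" where
  "level_run ep V m c \<delta> s l r Gs Hs \<longleftrightarrow>
     (\<forall>i\<le>l. let Gp = (if i = 0 then {1..m} else Gs (i - 1));
                Hi = core_edges ep c V (sampled r s i \<inter> Gp)
            in (peel_step ep V \<delta>)\<^sup>*\<^sup>* (Gp, Hi) (Gs i, Hs i) \<and>
               \<not> (\<exists>x. peel_step ep V \<delta> (Gs i, Hs i) x))"

definition pairwise_indep_uniform :: "(nat \<Rightarrow> nat) pmf \<Rightarrow> nat \<Rightarrow> nat \<Rightarrow> bool" where
  "pairwise_indep_uniform D s m \<longleftrightarrow>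
     (\<forall>j\<in>{1..s}. \<forall>a\<in>{1..m}. measure_pmf.prob D {f. f j = a} = 1 / real m) \<and>
     (\<forall>j\<in>{1..s}. \<forall>k\<in>{1..s}. j \<noteq> k \<longrightarrow> (\<forall>a\<in>{1..m}. \<forall>b\<in>{1..m}.
        measure_pmf.prob D {f. f j = a \<and> f k = b} = 1 / (real m)^2))"

end

theory Submission
  imports Defs
begin

lemma boundary_mono_graph: "F \<subseteq> F' \<Longrightarrow> boundary ep F C \<subseteq> boundary ep F' C"
  unfolding boundary_def by auto

lemma induced_mono: "F \<subseteq> F' \<Longrightarrow> induced ep F W \<subseteq> induced ep F' W"
  unfolding induced_def by auto

lemma edge_connected_mono:
  assumes "edge_connected ep c W F" "F \<subseteq> F'" "finite F'"
  shows "edge_connected ep c W F'"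
  unfolding edge_connected_def
proof (intro allI impI)
  fix C assume C: "C \<subseteq> W" "C \<noteq> {}" "C \<noteq> W"
  have "c \<le> card (boundary ep F C)" using assms(1) C unfolding edge_connected_def by auto
  also have "\<dots> \<le> card (boundary ep F' C)"
  proof (rule card_mono)
    show "finite (boundary ep F' C)" using assms(3) unfolding boundary_def by auto
    show "boundary ep F C \<subseteq> boundary ep F' C" using assms(2) unfolding boundary_def by auto
  qed
  finally show "c \<le> card (boundary ep F' C)" .
qed

lemma edge_connected_singleton: "edge_connected ep c {v} F"
  unfolding edge_connected_def by (auto simp: subset_singleton_iff)

lemma edge_connected_Un:
  assumes fin: "finite F" and ne: "W1 \<inter> W2 \<noteq> {}"
    and e1: "edge_connected ep c W1 (induced ep F W1)"
    and e2: "edge_connected ep c W2 (induced ep F W2)"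
  shows "edge_connected ep c (W1 \<union> W2) (induced ep F (W1 \<union> W2))"
  unfolding edge_connected_def
proof (intro allI impI)
  fix C assume C: "C \<subseteq> W1 \<union> W2" "C \<noteq> {}" "C \<noteq> W1 \<union> W2"
  have finb: "finite (boundary ep (induced ep F (W1 \<union> W2)) C)"
    using fin unfolding boundary_def induced_def by auto
  have sub: "boundary ep (induced ep F W) (C \<inter> W) \<subseteq> boundary ep (induced ep F (W1 \<union> W2)) C"
    if "W = W1 \<or> W = W2" for W
    using that unfolding boundary_def induced_def by auto
  show "c \<le> card (boundary ep (induced ep F (W1 \<union> W2)) C)"
  proof (cases "C \<inter> W1 \<noteq> {} \<and> C \<inter> W1 \<noteq> W1")
    case True
    then have "c \<le> card (boundary ep (induced ep F W1) (C \<inter> W1))"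
      using e1 unfolding edge_connected_def by auto
    also have "\<dots> \<le> card (boundary ep (induced ep F (W1 \<union> W2)) C)"
      by (rule card_mono[OF finb sub]) simp
    finally show ?thesis .
  next
    case F1: False
    show ?thesis
    proof (cases "C \<inter> W2 \<noteq> {} \<and> C \<inter> W2 \<noteq> W2")
      case True
      then have "c \<le> card (boundary ep (induced ep F W2) (C \<inter> W2))"
        using e2 unfolding edge_connected_def by auto
      also have "\<dots> \<le> card (boundary ep (induced ep F (W1 \<union> W2)) C)"
        by (rule card_mono[OF finb sub]) simp
      finally show ?thesis .
    next
      case False
      have a: "C \<inter> W1 = {} \<or> W1 \<subseteq> C" using F1 by blast
      have b: "C \<inter> W2 = {} \<or> W2 \<subseteq> C" using False by blast
      from a b have False
      proof (elim disjE)
        assume "C \<inter> W1 = {}" "C \<inter> W2 = {}" then show False using C by blast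
      next
        assume "C \<inter> W1 = {}" "W2 \<subseteq> C" then show False using ne by blast
      next
        assume "W1 \<subseteq> C" "C \<inter> W2 = {}" then show False using ne by blast
      next
        assume "W1 \<subseteq> C" "W2 \<subseteq> C" then show False using C by blast
      qed
      then show ?thesis ..
    qed
  qed
qed

lemma edge_connected_Union:
  assumes fin: "finite F" and "finite Fam" "Fam \<noteq> {}"
    and "\<forall>W\<in>Fam. v \<in> W \<and> edge_connected ep c W (induced ep F W)"
  shows "edge_connected ep c (\<Union>Fam) (induced ep F (\<Union>Fam))"
  using assms(2-)
proof (induction Fam rule: finite_ne_induct)
  case (singleton x)
  then show ?case by simp
next
  case (insert x Fam)
  have "x \<inter> \<Union>Fam \<noteq> {}" using insert by auto
  then show ?case using edge_connected_Un[OF fin, of x "\<Union>Fam"] insert by auto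
qed

definition part :: "(nat \<Rightarrow> nat \<times> nat) \<Rightarrow> nat \<Rightarrow> nat set \<Rightarrow> nat set \<Rightarrow> nat \<Rightarrow> nat set" where
  "part ep c V F v = \<Union>{W. W \<subseteq> V \<and> v \<in> W \<and> edge_connected ep c W (induced ep F W)}"

locale gr =
  fixes ep :: "nat \<Rightarrow> nat \<times> nat" and V :: "nat set" and m c :: nat
  assumes finV: "finite V"
    and edges: "\<forall>e\<in>{1..m}. fst (ep e) \<in> V \<and> snd (ep e) \<in> V \<and> fst (ep e) \<noteq> snd (ep e)"
    and c1: "1 \<le> c"
begin

abbreviation "E \<equiv> {1..m}"
abbreviation "ec W F \<equiv> edge_connected ep c W (induced ep F W)"
abbreviation "pt F v \<equiv> part ep c V F v"

lemma ep_V: "e \<in> E \<Longrightarrow> fst (ep e) \<in> V \<and> snd (ep e) \<in> V"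
  using edges by auto

lemma part_ec: assumes "finite F" "v \<in> V" shows "ec (pt F v) F"
proof -
  let ?Fam = "{W. W \<subseteq> V \<and> v \<in> W \<and> ec W F}"
  have "?Fam \<subseteq> Pow V" by blast
  then have "finite ?Fam" using finV by (meson finite_Pow_iff finite_subset)
  moreover have "{v} \<in> ?Fam" using assms(2) edge_connected_singleton[of ep c v] by simp
  moreover have "\<forall>W\<in>?Fam. v \<in> W \<and> ec W F" by blast
  ultimately have "ec (\<Union>?Fam) F"
    using edge_connected_Union[OF assms(1), of ?Fam v] by blast
  then show ?thesis unfolding part_def .
qed

lemma part_sub: "pt F v \<subseteq> V" unfolding part_def by (rule Union_least) blast

lemma part_self: "v \<in> V \<Longrightarrow> v \<in> pt F v"
  unfolding part_def by (rule UnionI[of "{v}"]) (use edge_connected_singleton[of ep c v] in simp_all)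

lemma part_max: "W \<subseteq> V \<Longrightarrow> v \<in> W \<Longrightarrow> ec W F \<Longrightarrow> W \<subseteq> pt F v"
  unfolding part_def by (rule Union_upper) simp

lemma part_eq: assumes "finite F" "v \<in> V" "u \<in> pt F v" shows "pt F u = pt F v"
proof
  have uV: "u \<in> V" using assms(3) part_sub by blast
  show "pt F v \<subseteq> pt F u" by (rule part_max[OF part_sub assms(3) part_ec[OF assms(1,2)]])
  then have "v \<in> pt F u" using part_self[OF assms(2)] by auto
  then show "pt F u \<subseteq> pt F v" by (rule part_max[OF part_sub _ part_ec[OF assms(1) uV]])
qed

lemma part_disj: assumes "finite F" "u \<in> V" "v \<in> V" "x \<in> pt F u" "x \<in> pt F v"
  shows "pt F u = pt F v"
  using part_eq[OF assms(1,2,4)] part_eq[OF assms(1,3,5)] by simp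

lemma ecc_eq: assumes "finite F" shows "ecc_components ep c V F = pt F ` V"
proof (intro set_eqI iffI)
  fix W assume "W \<in> ecc_components ep c V F"
  then have W: "W \<subseteq> V" "W \<noteq> {}" "ec W F"
    and mx: "\<And>W'. W \<subseteq> W' \<Longrightarrow> W' \<subseteq> V \<Longrightarrow> ec W' F \<Longrightarrow> W' = W"
    unfolding ecc_components_def by auto
  obtain v where v: "v \<in> W" using W by auto
  have "W \<subseteq> pt F v" using part_max[OF W(1) v W(3)] .
  then have "pt F v = W" using mx part_sub part_ec[OF assms] v W(1) by blast
  then show "W \<in> pt F ` V" using v W(1) by auto
next
  fix W assume "W \<in> pt F ` V"
  then obtain v where v: "v \<in> V" "W = pt F v" by auto
  show "W \<in> ecc_components ep c V F"
    unfolding ecc_components_def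
  proof (intro CollectI conjI allI impI)
    show "W \<subseteq> V" "ec W F" using v part_sub part_ec[OF assms v(1)] by auto
    show "W \<noteq> {}" using v part_self by auto
    fix W' assume "W \<subseteq> W' \<and> W' \<subseteq> V \<and> ec W' F"
    then show "W' = W" using part_max[of W' v F] v part_self[OF v(1)] by auto
  qed
qed

lemma core_iff: assumes "finite F" "F \<subseteq> E"
  shows "e \<in> core_edges ep c V F \<longleftrightarrow> e \<in> F \<and> snd (ep e) \<in> pt F (fst (ep e))"
proof
  assume "e \<in> core_edges ep c V F"
  then obtain W where "e \<in> F" "W \<in> pt F ` V" "fst (ep e) \<in> W" "snd (ep e) \<in> W"
    unfolding core_edges_def ecc_eq[OF assms(1)] by auto
  then show "e \<in> F \<and> snd (ep e) \<in> pt F (fst (ep e))"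
    using part_eq[OF assms(1)] by auto
next
  assume a: "e \<in> F \<and> snd (ep e) \<in> pt F (fst (ep e))"
  then have "fst (ep e) \<in> V" using assms ep_V by auto
  then show "e \<in> core_edges ep c V F"
    unfolding core_edges_def ecc_eq[OF assms(1)] using a part_self by auto
qed

lemma core_sub: "core_edges ep c V F \<subseteq> F" unfolding core_edges_def by auto

end

context gr begin

abbreviation "reach H v \<equiv> {u \<in> V. (adj ep H)\<^sup>*\<^sup>* v u}"

lemma adj_sym: "adj ep H x y \<Longrightarrow> adj ep H y x"
  unfolding adj_def by blast

lemma adj_E: assumes "adj ep H x y"
  obtains e where "e \<in> H" "ep e = (x, y) \<or> ep e = (y, x)"
  using assms unfolding adj_def by blast

lemma adj_mono: "H \<subseteq> H' \<Longrightarrow> adj ep H x y \<Longrightarrow> adj ep H' x y"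
  unfolding adj_def by blast

lemma adj_edge: "e \<in> H \<Longrightarrow> adj ep H (fst (ep e)) (snd (ep e))"
  unfolding adj_def by (intro bexI[of _ e]) auto

lemma comp_parts:
  assumes F: "finite F" "F \<subseteq> E" and G: "core_edges ep c V F \<subseteq> G" "G \<subseteq> E"
    and inpart: "\<forall>e\<in>G. snd (ep e) \<in> pt F (fst (ep e))"
    and v: "v \<in> V"
  shows "reach G v = pt F v"
proof
  have "(adj ep G)\<^sup>*\<^sup>* v u \<Longrightarrow> u \<in> pt F v" for u
  proof (induction rule: rtranclp_induct)
    case base
    then show ?case using part_self[OF v] .
  next
    case (step y z)
    obtain e where e: "e \<in> G" "ep e = (y, z) \<or> ep e = (z, y)" using step.hyps(2) by (rule adj_E)
    have yv: "pt F y = pt F v" using part_eq[OF F(1) v step.IH] .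
    have eV: "fst (ep e) \<in> V" "snd (ep e) \<in> V" using e(1) G(2) ep_V by auto
    have ein: "snd (ep e) \<in> pt F (fst (ep e))" using inpart e(1) by blast
    show ?case
    proof (cases "ep e = (y, z)")
      case True
      then show ?thesis using ein yv by simp
    next
      case False
      then have ez: "ep e = (z, y)" using e(2) by simp
      then have zV: "z \<in> V" and yz: "y \<in> pt F z" using eV ein by auto
      have "pt F y = pt F z" using part_eq[OF F(1) zV yz] .
      then show ?thesis using part_self[OF zV] yv by simp
    qed
  qed
  then show "reach G v \<subseteq> pt F v" by blast
next
  let ?P = "pt F v"
  let ?R = "{u \<in> ?P. (adj ep G)\<^sup>*\<^sup>* v u}"
  show "pt F v \<subseteq> reach G v"
  proof (rule ccontr)
    assume "\<not> pt F v \<subseteq> reach G v"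
    then have RP: "?R \<noteq> ?P" using part_sub by blast
    have Rne: "?R \<noteq> {}" using part_self[OF v] by blast
    have RsubP: "?R \<subseteq> ?P" by (rule subsetI) simp
    have "c \<le> card (boundary ep (induced ep F ?P) ?R)"
      using part_ec[OF F(1) v] RP Rne RsubP unfolding edge_connected_def by simp
    then have "boundary ep (induced ep F ?P) ?R \<noteq> {}" using c1 by auto
    then obtain e where e: "e \<in> F" "fst (ep e) \<in> ?P" "snd (ep e) \<in> ?P"
      "(fst (ep e) \<in> ?R) \<noteq> (snd (ep e) \<in> ?R)"
      unfolding boundary_def induced_def by blast
    have fV: "fst (ep e) \<in> V" using e(2) part_sub by blast
    have "pt F (fst (ep e)) = ?P" using part_eq[OF F(1) v e(2)] .
    then have "e \<in> core_edges ep c V F" using core_iff[OF F] e by simp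
    then have eG: "e \<in> G" using G(1) by blast
    have a1: "adj ep G (fst (ep e)) (snd (ep e))" by (rule adj_edge[OF eG])
    have a2: "adj ep G (snd (ep e)) (fst (ep e))" by (rule adj_sym[OF a1])
    show False
    proof (cases "fst (ep e) \<in> ?R")
      case True
      then have "(adj ep G)\<^sup>*\<^sup>* v (snd (ep e))"
        using rtranclp.rtrancl_into_rtrancl[where r="adj ep _" and c="snd (ep e)", OF _ a1] by simp
      then show False using e(3,4) True by blast
    next
      case False
      then have "snd (ep e) \<in> ?R" using e(4) by blast
      then have "(adj ep G)\<^sup>*\<^sup>* v (fst (ep e))"
        using rtranclp.rtrancl_into_rtrancl[where r="adj ep _" and c="fst (ep e)", OF _ a2] by simp
      then show False using e(2) False by blast
    qed
  qed
qed

lemma components_parts: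
  assumes "finite F" "F \<subseteq> E" "core_edges ep c V F \<subseteq> G" "G \<subseteq> E"
    "\<forall>e\<in>G. snd (ep e) \<in> pt F (fst (ep e))"
  shows "components ep V G = pt F ` V"
  unfolding components_def using comp_parts[OF assms] by (intro image_cong) auto

lemma core_inpart: assumes "finite F" "F \<subseteq> E"
  shows "\<forall>e\<in>core_edges ep c V F. snd (ep e) \<in> pt F (fst (ep e))"
  using core_iff[OF assms] by blast

lemma core_E: "F \<subseteq> E \<Longrightarrow> core_edges ep c V F \<subseteq> E" using core_sub by blast

lemma components_core: assumes "finite F" "F \<subseteq> E"
  shows "components ep V (core_edges ep c V F) = pt F ` V"
  by (rule components_parts[OF assms order.refl core_E[OF assms(2)] core_inpart[OF assms]])

lemma H_bd_disj: assumes H: "H \<subseteq> E" and C: "C \<in> components ep V H"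
  shows "H \<inter> boundary ep G C = {}"
proof (rule ccontr)
  assume "H \<inter> boundary ep G C \<noteq> {}"
  then obtain e where e: "e \<in> H" "(fst (ep e) \<in> C) \<noteq> (snd (ep e) \<in> C)"
    unfolding boundary_def by blast
  obtain v where v: "v \<in> V" "C = reach H v" using C unfolding components_def by blast
  have eV: "fst (ep e) \<in> V" "snd (ep e) \<in> V" using e(1) H ep_V by auto
  have a1: "adj ep H (fst (ep e)) (snd (ep e))" by (rule adj_edge[OF e(1)])
  have a2: "adj ep H (snd (ep e)) (fst (ep e))" by (rule adj_sym[OF a1])
  show False
  proof (cases "fst (ep e) \<in> C")
    case True
    then have "(adj ep H)\<^sup>*\<^sup>* v (snd (ep e))" using v(2) rtranclp.rtrancl_into_rtrancl[where r="adj ep _" and c="snd (ep e)", OF _ a1] by simp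
    then show False using True e(2) eV v(2) by blast
  next
    case False
    then have "snd (ep e) \<in> C" using e(2) by blast
    then have "(adj ep H)\<^sup>*\<^sup>* v (fst (ep e))" using v(2) rtranclp.rtrancl_into_rtrancl[where r="adj ep _" and c="fst (ep e)", OF _ a2] by simp
    then show False using False eV v(2) by blast
  qed
qed

lemma step_H:
  assumes "peel_step ep V \<delta> (G, H) (G', H')" "H \<subseteq> E"
  shows "H' = H \<and> G' \<subseteq> G \<and> H \<inter> G \<subseteq> G' \<and>
    (\<exists>C\<in>components ep V H. G' = G - boundary ep G C \<and> 0 < card (boundary ep G C)
        \<and> card (boundary ep G C) < \<delta>)"
  using assms(1)
proof (cases rule: peel_step.cases)
  case (1 C)
  have d: "H \<inter> boundary ep G C = {}" by (rule H_bd_disj[OF assms(2) 1(3)])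
  then have "H - boundary ep G C = H" by blast
  then show ?thesis using 1 d by blast
qed

lemma star_H:
  assumes "(peel_step ep V \<delta>)\<^sup>*\<^sup>* (G, H) (G', H')" "H \<subseteq> E"
  shows "H' = H \<and> G' \<subseteq> G \<and> H \<inter> G \<subseteq> G'"
  using assms(1)
proof (induction rule: rtranclp_induct2)
  case refl
  then show ?case by simp
next
  case (step a b aa bb)
  then have "b = H" by simp
  then show ?case using step_H[of \<delta> a H aa bb] step assms(2) by blast
qed

lemma terminal_bd:
  assumes "\<not> (\<exists>x. peel_step ep V \<delta> (T, H) x)" "finite T" "C \<in> components ep V H"
  shows "boundary ep T C = {} \<or> \<delta> \<le> card (boundary ep T C)"
proof (rule ccontr)
  assume a: "\<not> (boundary ep T C = {} \<or> \<delta> \<le> card (boundary ep T C))"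
  have "finite (boundary ep T C)" using assms(2) unfolding boundary_def by auto
  then have "0 < card (boundary ep T C)" using a by auto
  then have "peel_step ep V \<delta> (T, H) (T - boundary ep T C, H - boundary ep T C)"
    using a assms(3) by (intro peel_step.intros) auto
  then show False using assms(1) by blast
qed

lemma terminal_sub:
  assumes T2: "\<not> (\<exists>x. peel_step ep V \<delta> (T2, H) x)" "T2 \<subseteq> G" "T2 \<subseteq> E"
    and H: "H \<subseteq> E" and G: "G \<subseteq> E"
    and st: "(peel_step ep V \<delta>)\<^sup>*\<^sup>* (G, H) (T1, H1)"
  shows "T2 \<subseteq> T1"
  using st
proof (induction rule: rtranclp_induct2)
  case refl
  then show ?case using T2 by simp
next
  case (step a b aa bb)
  have sH: "b = H \<and> a \<subseteq> G \<and> H \<inter> G \<subseteq> a" by (rule star_H[OF step.hyps(1) H])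
  then have bH: "b = H" and aG: "a \<subseteq> G" by simp_all
  have st1: "peel_step ep V \<delta> (a, H) (aa, bb)" using step.hyps(2) bH by simp
  have "\<exists>C\<in>components ep V H. aa = a - boundary ep a C \<and> 0 < card (boundary ep a C)
        \<and> card (boundary ep a C) < \<delta>" using step_H[OF st1 H] by (elim conjE)
  then obtain C where C: "C \<in> components ep V H" "aa = a - boundary ep a C"
    "0 < card (boundary ep a C)" "card (boundary ep a C) < \<delta>"
    by (elim bexE conjE)
  have fa: "finite a" using finite_subset[OF aG] G finite_subset by blast
  have fT2: "finite T2" using finite_subset[OF T2(3)] by simp
  have sub: "boundary ep T2 C \<subseteq> boundary ep a C" by (rule boundary_mono_graph[OF step.IH])
  have "finite (boundary ep a C)" using fa unfolding boundary_def by simp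
  then have "card (boundary ep T2 C) \<le> card (boundary ep a C)" using sub by (rule card_mono)
  then have "\<not> \<delta> \<le> card (boundary ep T2 C)" using C(4) by linarith
  then have e: "boundary ep T2 C = {}"
    using terminal_bd[OF T2(1) fT2 C(1)] by simp
  have "T2 \<inter> boundary ep a C = {}"
  proof (rule ccontr)
    assume "T2 \<inter> boundary ep a C \<noteq> {}"
    then obtain x where "x \<in> T2" "x \<in> boundary ep a C" by blast
    then have "x \<in> boundary ep T2 C" unfolding boundary_def by simp
    then show False using e by simp
  qed
  then show ?case using step.IH C(2) by blast
qed

lemma peel_exists:
  assumes "G \<subseteq> E" "H \<subseteq> E"
  shows "\<exists>T. (peel_step ep V \<delta>)\<^sup>*\<^sup>* (G, H) (T, H) \<and> \<not> (\<exists>x. peel_step ep V \<delta> (T, H) x)"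
  using assms(1)
proof (induction "card G" arbitrary: G rule: less_induct)
  case less
  show ?case
  proof (cases "\<exists>x. peel_step ep V \<delta> (G, H) x")
    case False
    have "(peel_step ep V \<delta>)\<^sup>*\<^sup>* (G, H) (G, H)" by simp
    then show ?thesis using False by blast
  next
    case True
    then obtain x where "peel_step ep V \<delta> (G, H) x" by (elim exE)
    then obtain G' H' where st: "peel_step ep V \<delta> (G, H) (G', H')" by (cases x) simp
    have "\<exists>C\<in>components ep V H. G' = G - boundary ep G C \<and> 0 < card (boundary ep G C)
        \<and> card (boundary ep G C) < \<delta>" and H': "H' = H" using step_H[OF st assms(2)] by simp_all
    then obtain C where C: "G' = G - boundary ep G C" "0 < card (boundary ep G C)"
      by (elim bexE conjE) simp
    have fG: "finite G" using less.prems finite_subset by blast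
    have bs: "boundary ep G C \<subseteq> G" unfolding boundary_def by blast
    have "card G' = card G - card (boundary ep G C)" using C(1) card_Diff_subset[OF finite_subset[OF bs fG] bs] by simp
    moreover have "card (boundary ep G C) \<le> card G" by (rule card_mono[OF fG bs])
    ultimately have "card G' < card G" using C(2) by linarith
    moreover have "G' \<subseteq> E" using C(1) less.prems by blast
    ultimately have "\<exists>T. (peel_step ep V \<delta>)\<^sup>*\<^sup>* (G', H) (T, H) \<and> \<not> (\<exists>x. peel_step ep V \<delta> (T, H) x)"
      by (rule less.hyps)
    then obtain T where T: "(peel_step ep V \<delta>)\<^sup>*\<^sup>* (G', H) (T, H)" "\<not> (\<exists>x. peel_step ep V \<delta> (T, H) x)"
      by (elim exE conjE)
    have st': "peel_step ep V \<delta> (G, H) (G', H)" using st H' by simp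
    have "(peel_step ep V \<delta>)\<^sup>*\<^sup>* (G, H) (T, H)" by (rule converse_rtranclp_into_rtranclp[OF st' T(1)])
    then show ?thesis using T(2) by blast
  qed
qed

definition peelG :: "nat \<Rightarrow> nat set \<Rightarrow> nat set \<Rightarrow> nat set" where
  "peelG \<delta> H G = (THE T. (peel_step ep V \<delta>)\<^sup>*\<^sup>* (G, H) (T, H) \<and> \<not> (\<exists>x. peel_step ep V \<delta> (T, H) x))"

lemma peel_unique:
  assumes "G \<subseteq> E" "H \<subseteq> E"
    and "(peel_step ep V \<delta>)\<^sup>*\<^sup>* (G, H) (T, H')" "\<not> (\<exists>x. peel_step ep V \<delta> (T, H') x)"
  shows "T = peelG \<delta> H G \<and> H' = H"
proof -
  have sH: "H' = H \<and> T \<subseteq> G \<and> H \<inter> G \<subseteq> T" by (rule star_H[OF assms(3,2)])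
  then have H': "H' = H" and TG: "T \<subseteq> G" by simp_all
  have TE: "T \<subseteq> E" using TG assms(1) by (rule order.trans)
  have nT: "\<not> (\<exists>x. peel_step ep V \<delta> (T, H) x)" using assms(4) H' by simp
  have st: "(peel_step ep V \<delta>)\<^sup>*\<^sup>* (G, H) (T, H)" using assms(3) H' by simp
  have uniq: "T2 = T" if t1: "(peel_step ep V \<delta>)\<^sup>*\<^sup>* (G, H) (T2, H)" and
     t2: "\<not> (\<exists>x. peel_step ep V \<delta> (T2, H) x)" for T2
  proof -
    have "H = H \<and> T2 \<subseteq> G \<and> H \<inter> G \<subseteq> T2" by (rule star_H[OF t1 assms(2)])
    then have T2G: "T2 \<subseteq> G" by simp
    have T2E: "T2 \<subseteq> E" using T2G assms(1) by (rule order.trans)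
    have "T2 \<subseteq> T" by (rule terminal_sub[OF t2 T2G T2E assms(2,1) st])
    moreover have "T \<subseteq> T2" by (rule terminal_sub[OF nT TG TE assms(2,1) t1])
    ultimately show ?thesis by (rule antisym)
  qed
  have "peelG \<delta> H G = T"
    unfolding peelG_def
  proof (rule the_equality)
    show "(peel_step ep V \<delta>)\<^sup>*\<^sup>* (G, H) (T, H) \<and> \<not> (\<exists>x. peel_step ep V \<delta> (T, H) x)"
      using st nT by (rule conjI)
    fix T2 assume "(peel_step ep V \<delta>)\<^sup>*\<^sup>* (G, H) (T2, H) \<and> \<not> (\<exists>x. peel_step ep V \<delta> (T2, H) x)"
    then show "T2 = T" using uniq by (elim conjE)
  qed
  then show ?thesis using H' by simp
qed

lemma peel_props:
  assumes "G \<subseteq> E" "H \<subseteq> E"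
  shows "peelG \<delta> H G \<subseteq> G" "H \<inter> G \<subseteq> peelG \<delta> H G"
    "\<And>C. C \<in> components ep V H \<Longrightarrow> boundary ep (peelG \<delta> H G) C = {} \<or> \<delta> \<le> card (boundary ep (peelG \<delta> H G) C)"
proof -
  obtain T where T: "(peel_step ep V \<delta>)\<^sup>*\<^sup>* (G, H) (T, H)" "\<not> (\<exists>x. peel_step ep V \<delta> (T, H) x)"
    using peel_exists[OF assms, of \<delta>] by (elim exE conjE)
  have eq: "T = peelG \<delta> H G" using peel_unique[OF assms T] by simp
  have sH: "H = H \<and> T \<subseteq> G \<and> H \<inter> G \<subseteq> T" by (rule star_H[OF T(1) assms(2)])
  then show "peelG \<delta> H G \<subseteq> G" "H \<inter> G \<subseteq> peelG \<delta> H G" using eq by simp_all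
  have fT: "finite T" using sH assms(1) finite_subset by (metis finite_atLeastAtMost)
  show "boundary ep (peelG \<delta> H G) C = {} \<or> \<delta> \<le> card (boundary ep (peelG \<delta> H G) C)"
    if "C \<in> components ep V H" for C
    using terminal_bd[OF T(2) fT that] eq by simp
qed

end

lemma cross_split:
  fixes QQ P1 P2 :: "nat set set"
  assumes "QQ = P1 \<union> P2" "\<forall>W\<in>P1. W \<subseteq> C" "\<forall>W\<in>P2. W \<inter> C = {}" "\<forall>W\<in>QQ. W \<subseteq> U"
  shows "{e \<in> F. \<exists>W1\<in>QQ. \<exists>W2\<in>QQ. W1 \<noteq> W2 \<and> fst (ep e) \<in> W1 \<and> snd (ep e) \<in> W2}
     \<subseteq> {e \<in> F. \<exists>W1\<in>P1. \<exists>W2\<in>P1. W1 \<noteq> W2 \<and> fst (ep e) \<in> W1 \<and> snd (ep e) \<in> W2}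
     \<union> {e \<in> F. \<exists>W1\<in>P2. \<exists>W2\<in>P2. W1 \<noteq> W2 \<and> fst (ep e) \<in> W1 \<and> snd (ep e) \<in> W2}
     \<union> boundary ep (induced ep F U) C"
proof (rule subsetI)
  fix e assume "e \<in> {e \<in> F. \<exists>W1\<in>QQ. \<exists>W2\<in>QQ. W1 \<noteq> W2 \<and> fst (ep e) \<in> W1 \<and> snd (ep e) \<in> W2}"
  then obtain W1 W2 where e: "e \<in> F" "W1 \<in> QQ" "W2 \<in> QQ" "W1 \<noteq> W2" "fst (ep e) \<in> W1" "snd (ep e) \<in> W2"
    by auto
  have U: "fst (ep e) \<in> U" "snd (ep e) \<in> U" using e assms(4) by auto
  consider "W1 \<in> P1" "W2 \<in> P1" | "W1 \<in> P2" "W2 \<in> P2" | "W1 \<in> P1" "W2 \<in> P2" | "W1 \<in> P2" "W2 \<in> P1"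
    using e(2,3) assms(1) by auto
  then show "e \<in> {e \<in> F. \<exists>W1\<in>P1. \<exists>W2\<in>P1. W1 \<noteq> W2 \<and> fst (ep e) \<in> W1 \<and> snd (ep e) \<in> W2}
     \<union> {e \<in> F. \<exists>W1\<in>P2. \<exists>W2\<in>P2. W1 \<noteq> W2 \<and> fst (ep e) \<in> W1 \<and> snd (ep e) \<in> W2}
     \<union> boundary ep (induced ep F U) C"
  proof cases
    case 1
    have "\<exists>W1\<in>P1. \<exists>W2\<in>P1. W1 \<noteq> W2 \<and> fst (ep e) \<in> W1 \<and> snd (ep e) \<in> W2"
      using 1 e(4,5,6) by (intro bexI[of _ W1] bexI[of _ W2]) simp_all
    then show ?thesis using e(1) by simp
  next
    case 2
    have "\<exists>W1\<in>P2. \<exists>W2\<in>P2. W1 \<noteq> W2 \<and> fst (ep e) \<in> W1 \<and> snd (ep e) \<in> W2"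
      using 2 e(4,5,6) by (intro bexI[of _ W1] bexI[of _ W2]) simp_all
    then show ?thesis using e(1) by simp
  next
    case 3
    then have "fst (ep e) \<in> C" "snd (ep e) \<notin> C" using e(5,6) assms(2,3) by auto
    then show ?thesis using e(1) U unfolding boundary_def induced_def by auto
  next
    case 4
    then have "fst (ep e) \<notin> C" "snd (ep e) \<in> C" using e(5,6) assms(2,3) by auto
    then show ?thesis using e(1) U unfolding boundary_def induced_def by auto
  qed
qed

context gr begin

lemma cross_bound:
  assumes fin: "finite F" 
  shows "finite QQ \<Longrightarrow> (\<forall>W\<in>QQ. W \<subseteq> V \<and> W \<noteq> {} \<and> ec W F) \<Longrightarrow>
    (\<forall>W1\<in>QQ. \<forall>W2\<in>QQ. W1 \<noteq> W2 \<longrightarrow> W1 \<inter> W2 = {}) \<Longrightarrow>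
    (\<forall>QQ0. QQ0 \<subseteq> QQ \<longrightarrow> 2 \<le> card QQ0 \<longrightarrow> \<not> ec (\<Union>QQ0) F) \<Longrightarrow>
    card {e \<in> F. \<exists>W1\<in>QQ. \<exists>W2\<in>QQ. W1 \<noteq> W2 \<and> fst (ep e) \<in> W1 \<and> snd (ep e) \<in> W2} \<le> c * (card QQ - 1)"
proof (induction "card QQ" arbitrary: QQ rule: less_induct)
  case less
  let ?cr = "\<lambda>QQ. {e \<in> F. \<exists>W1\<in>QQ. \<exists>W2\<in>QQ. W1 \<noteq> W2 \<and> fst (ep e) \<in> W1 \<and> snd (ep e) \<in> W2}"
  show ?case
  proof (cases "card QQ \<le> 1")
    case True
    have "?cr QQ = {}"
    proof (rule ccontr)
      assume "?cr QQ \<noteq> {}"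
      then obtain W1 W2 where "W1 \<in> QQ" "W2 \<in> QQ" "W1 \<noteq> W2" by blast
      then have "card {W1, W2} \<le> card QQ" by (intro card_mono less.prems(1)) simp
      then show False using True \<open>W1 \<noteq> W2\<close> by simp
    qed
    then have "card (?cr QQ) = 0" by (simp only: card.empty)
    then show ?thesis by linarith
  next
    case False
    let ?U = "\<Union>QQ"
    have "\<not> ec ?U F" using less.prems(4) False by simp
    then obtain C where C: "C \<subseteq> ?U" "C \<noteq> {}" "C \<noteq> ?U"
      and Ccut: "card (boundary ep (induced ep F ?U) C) < c"
      unfolding edge_connected_def by (auto simp: not_le)
    have finB: "finite (boundary ep (induced ep F ?U) C)"
      using fin unfolding boundary_def induced_def by simp
    have split: "W \<subseteq> C \<or> W \<inter> C = {}" if W: "W \<in> QQ" for W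
    proof (rule ccontr)
      assume a: "\<not> (W \<subseteq> C \<or> W \<inter> C = {})"
      have ecW: "ec W F" using less.prems(2) W by simp
      have "c \<le> card (boundary ep (induced ep F W) (C \<inter> W))"
        using ecW a unfolding edge_connected_def by (metis Int_lower2 inf.absorb_iff2 inf_commute)
      also have "\<dots> \<le> card (boundary ep (induced ep F ?U) C)"
      proof (rule card_mono[OF finB])
        show "boundary ep (induced ep F W) (C \<inter> W) \<subseteq> boundary ep (induced ep F ?U) C"
        proof
          fix e assume "e \<in> boundary ep (induced ep F W) (C \<inter> W)"
          then have "e \<in> F" "fst (ep e) \<in> W" "snd (ep e) \<in> W" "(fst (ep e) \<in> C) \<noteq> (snd (ep e) \<in> C)"
            unfolding boundary_def induced_def by auto
          moreover have "W \<subseteq> ?U" using W by (rule Union_upper)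
          ultimately show "e \<in> boundary ep (induced ep F ?U) C"
            unfolding boundary_def induced_def by auto
        qed
      qed
      finally show False using Ccut by simp
    qed
    define P1 where "P1 = {W \<in> QQ. W \<subseteq> C}"
    define P2 where "P2 = {W \<in> QQ. W \<inter> C = {}}"
    have P1sub: "P1 \<subseteq> QQ" and P2sub: "P2 \<subseteq> QQ" unfolding P1_def P2_def by auto
    have finP: "finite P1" "finite P2" using P1sub P2sub less.prems(1) finite_subset by auto
    have Pun: "QQ = P1 \<union> P2" unfolding P1_def P2_def using split by blast
    have Pdisj: "P1 \<inter> P2 = {}"
    proof (rule ccontr)
      assume "P1 \<inter> P2 \<noteq> {}"
      then obtain W where "W \<in> QQ" "W \<subseteq> C" "W \<inter> C = {}" unfolding P1_def P2_def by blast
      then have "W = {}" by blast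
      then show False using less.prems(2) \<open>W \<in> QQ\<close> by simp
    qed
    have cardP: "card QQ = card P1 + card P2"
      using Pun Pdisj finP card_Un_disjoint by simp
    have P1ne: "P1 \<noteq> {}"
    proof -
      obtain x where "x \<in> C" using C(2) by blast
      then obtain W where W: "W \<in> QQ" "x \<in> W" using C(1) by blast
      then have "W \<subseteq> C" using split \<open>x \<in> C\<close> by blast
      then show ?thesis unfolding P1_def using W by blast
    qed
    have P2ne: "P2 \<noteq> {}"
    proof -
      obtain x where "x \<in> ?U" "x \<notin> C" using C(1,3) by blast
      then obtain W where W: "W \<in> QQ" "x \<in> W" by blast
      then have "W \<inter> C = {}" using split \<open>x \<notin> C\<close> by blast
      then show ?thesis unfolding P2_def using W by blast
    qed
    have c1p: "card P1 \<ge> 1" "card P2 \<ge> 1" using P1ne P2ne finP by (simp_all add: Suc_le_eq card_gt_0_iff)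
    have IH1: "card (?cr P1) \<le> c * (card P1 - 1)"
    proof (rule less.hyps)
      show "card P1 < card QQ" using cardP c1p by linarith
      show "finite P1" by (rule finP(1))
      show "\<forall>W\<in>P1. W \<subseteq> V \<and> W \<noteq> {} \<and> ec W F" using less.prems(2) P1sub by blast
      show "\<forall>W1\<in>P1. \<forall>W2\<in>P1. W1 \<noteq> W2 \<longrightarrow> W1 \<inter> W2 = {}" using less.prems(3) P1sub by blast
      show "\<forall>QQ0. QQ0 \<subseteq> P1 \<longrightarrow> 2 \<le> card QQ0 \<longrightarrow> \<not> ec (\<Union>QQ0) F"
        using less.prems(4) P1sub by (meson order.trans)
    qed
    have IH2: "card (?cr P2) \<le> c * (card P2 - 1)"
    proof (rule less.hyps)
      show "card P2 < card QQ" using cardP c1p by linarith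
      show "finite P2" by (rule finP(2))
      show "\<forall>W\<in>P2. W \<subseteq> V \<and> W \<noteq> {} \<and> ec W F" using less.prems(2) P2sub by blast
      show "\<forall>W1\<in>P2. \<forall>W2\<in>P2. W1 \<noteq> W2 \<longrightarrow> W1 \<inter> W2 = {}" using less.prems(3) P2sub by blast
      show "\<forall>QQ0. QQ0 \<subseteq> P2 \<longrightarrow> 2 \<le> card QQ0 \<longrightarrow> \<not> ec (\<Union>QQ0) F"
        using less.prems(4) P2sub by (meson order.trans)
    qed
    have sub: "?cr QQ \<subseteq> ?cr P1 \<union> ?cr P2 \<union> boundary ep (induced ep F ?U) C"
      by (rule cross_split[OF Pun]) (auto simp: P1_def P2_def)
    have "card (?cr QQ) \<le> card (?cr P1 \<union> ?cr P2 \<union> boundary ep (induced ep F ?U) C)"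
      by (rule card_mono[OF _ sub]) (use fin finB in simp)
    also have "\<dots> \<le> card (?cr P1) + card (?cr P2) + card (boundary ep (induced ep F ?U) C)"
      by (meson card_Un_le add_le_mono order_trans order.refl)
    also have "\<dots> \<le> c * (card P1 - 1) + c * (card P2 - 1) + c"
      using IH1 IH2 Ccut by linarith
    also have "\<dots> = c * (card QQ - 1)"
    proof -
      obtain a b where ab: "card P1 = Suc a" "card P2 = Suc b" using c1p by (metis One_nat_def Suc_le_D)
      show ?thesis using cardP ab by (simp add: algebra_simps)
    qed
    finally show ?thesis .
  qed
qed

end

lemma sampled_Suc: "sampled r s (Suc i) = sampled r s i \<union> r (Suc i) ` {1..s}"
  unfolding sampled_def by (auto simp: atLeastAtMostSuc_conv)

lemma sampled_cong: "(\<And>k. k \<in> {1..i} \<Longrightarrow> r k = r' k) \<Longrightarrow> sampled r s i = sampled r' s i"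
  unfolding sampled_def by simp

locale lv = gr + fixes \<delta> s :: nat
begin

primrec gseq :: "(nat \<Rightarrow> nat \<Rightarrow> nat) \<Rightarrow> nat \<Rightarrow> nat set" where
  "gseq r 0 = E"
| "gseq r (Suc i) = peelG \<delta> (core_edges ep c V (sampled r s i \<inter> gseq r i)) (gseq r i)"

definition FF :: "(nat \<Rightarrow> nat \<Rightarrow> nat) \<Rightarrow> nat \<Rightarrow> nat set" where
  "FF r i = sampled r s i \<inter> gseq r i"

definition act :: "(nat \<Rightarrow> nat \<Rightarrow> nat) \<Rightarrow> nat \<Rightarrow> nat set set" where
  "act r i = {W \<in> pt (FF r i) ` V. boundary ep (gseq r (Suc i)) W \<noteq> {}}"

lemma gseq_E: "gseq r i \<subseteq> E"
proof (induction i)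
  case 0 then show ?case by simp
next
  case (Suc i)
  have "core_edges ep c V (sampled r s i \<inter> gseq r i) \<subseteq> E" using Suc core_sub by blast
  then have "peelG \<delta> (core_edges ep c V (sampled r s i \<inter> gseq r i)) (gseq r i) \<subseteq> gseq r i"
    by (rule peel_props(1)[OF Suc])
  then show ?case using Suc by simp
qed

lemma FF_E: "FF r i \<subseteq> E" and FF_fin: "finite (FF r i)" and FF_sub: "FF r i \<subseteq> gseq r i"
  using gseq_E[of r i] finite_subset unfolding FF_def by auto

lemma coreFF_E: "core_edges ep c V (FF r i) \<subseteq> E" using core_sub FF_E by blast

lemma gseq_Suc: "gseq r (Suc i) = peelG \<delta> (core_edges ep c V (FF r i)) (gseq r i)"
  by (simp add: FF_def)

lemma gseq_props:
  shows "gseq r (Suc i) \<subseteq> gseq r i"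
    and "core_edges ep c V (FF r i) \<subseteq> gseq r (Suc i)"
    and "\<And>C. C \<in> pt (FF r i) ` V \<Longrightarrow> boundary ep (gseq r (Suc i)) C = {} \<or> \<delta> \<le> card (boundary ep (gseq r (Suc i)) C)"
proof -
  note pp = peel_props[OF gseq_E[of r i] coreFF_E[of r i], where \<delta>=\<delta>]
  show "gseq r (Suc i) \<subseteq> gseq r i" using pp(1) gseq_Suc by simp
  have "core_edges ep c V (FF r i) \<subseteq> gseq r i" using core_sub FF_sub by blast
  then show "core_edges ep c V (FF r i) \<subseteq> gseq r (Suc i)" using pp(2) gseq_Suc by blast
  fix C assume "C \<in> pt (FF r i) ` V"
  then have "C \<in> components ep V (core_edges ep c V (FF r i))"
    using components_core[OF FF_fin FF_E] by simp
  then show "boundary ep (gseq r (Suc i)) C = {} \<or> \<delta> \<le> card (boundary ep (gseq r (Suc i)) C)"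
    using pp(3) gseq_Suc by simp
qed

lemma gseq_fin: "finite (gseq r i)" using gseq_E finite_subset by blast

lemma level_run_eq:
  assumes lr: "level_run ep V m c \<delta> s l r Gs Hs"
  shows "i \<le> l \<Longrightarrow> Gs i = gseq r (Suc i) \<and> Hs i = core_edges ep c V (FF r i)"
proof (induction i)
  case 0
  have st: "(peel_step ep V \<delta>)\<^sup>*\<^sup>* (E, core_edges ep c V (sampled r s 0 \<inter> E)) (Gs 0, Hs 0)"
     and tm: "\<not> (\<exists>x. peel_step ep V \<delta> (Gs 0, Hs 0) x)"
    using lr unfolding level_run_def by (auto simp: Let_def)
  have "core_edges ep c V (sampled r s 0 \<inter> E) = core_edges ep c V (FF r 0)" by (simp add: FF_def)
  then have st': "(peel_step ep V \<delta>)\<^sup>*\<^sup>* (gseq r 0, core_edges ep c V (FF r 0)) (Gs 0, Hs 0)" using st by simp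
  have "Gs 0 = peelG \<delta> (core_edges ep c V (FF r 0)) (gseq r 0) \<and> Hs 0 = core_edges ep c V (FF r 0)"
    by (rule peel_unique[OF gseq_E coreFF_E st' tm])
  then show ?case using gseq_Suc[of r 0] by simp
next
  case (Suc i)
  then have IH: "Gs i = gseq r (Suc i)" by simp
  have st: "(peel_step ep V \<delta>)\<^sup>*\<^sup>* (Gs i, core_edges ep c V (sampled r s (Suc i) \<inter> Gs i)) (Gs (Suc i), Hs (Suc i))"
     and tm: "\<not> (\<exists>x. peel_step ep V \<delta> (Gs (Suc i), Hs (Suc i)) x)"
    using lr Suc.prems unfolding level_run_def by (auto simp: Let_def)
  have "core_edges ep c V (sampled r s (Suc i) \<inter> Gs i) = core_edges ep c V (FF r (Suc i))"
    by (simp add: FF_def IH)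
  then have st': "(peel_step ep V \<delta>)\<^sup>*\<^sup>* (gseq r (Suc i), core_edges ep c V (FF r (Suc i))) (Gs (Suc i), Hs (Suc i))"
    using st IH by simp
  have "Gs (Suc i) = peelG \<delta> (core_edges ep c V (FF r (Suc i))) (gseq r (Suc i)) \<and> Hs (Suc i) = core_edges ep c V (FF r (Suc i))"
    by (rule peel_unique[OF gseq_E coreFF_E st' tm])
  then show ?case using gseq_Suc[of r "Suc i"] by simp
qed

lemma good:
  assumes "act r l = {}"
  shows "(\<forall>C \<in> components ep V (gseq r (Suc l)). edge_connected ep c C (induced ep (gseq r (Suc l)) C)) \<and>
         components ep V (gseq r (Suc l)) = components ep V (core_edges ep c V (FF r l))"
proof -
  let ?F = "FF r l" and ?T = "gseq r (Suc l)"
  have inact: "boundary ep ?T W = {}" if "W \<in> pt ?F ` V" for W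
    using assms that unfolding act_def by blast
  have inpart: "\<forall>e\<in>?T. snd (ep e) \<in> pt ?F (fst (ep e))"
  proof
    fix e assume e: "e \<in> ?T"
    then have eE: "e \<in> E" using gseq_E by blast
    then have xV: "fst (ep e) \<in> V" using ep_V by blast
    have "boundary ep ?T (pt ?F (fst (ep e))) = {}" using inact xV by blast
    moreover have "fst (ep e) \<in> pt ?F (fst (ep e))" by (rule part_self[OF xV])
    ultimately show "snd (ep e) \<in> pt ?F (fst (ep e))" using e unfolding boundary_def by blast
  qed
  have compT: "components ep V ?T = pt ?F ` V"
    by (rule components_parts[OF FF_fin FF_E gseq_props(2) gseq_E inpart])
  have compH: "components ep V (core_edges ep c V ?F) = pt ?F ` V"
    by (rule components_core[OF FF_fin FF_E])
  have ecC: "edge_connected ep c C (induced ep ?T C)" if CC: "C \<in> pt ?F ` V" for C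
  proof -
    obtain v where v: "v \<in> V" "C = pt ?F v" using CC by blast
    have ec0: "ec C ?F" using part_ec[OF FF_fin v(1)] v(2) by simp
    have "induced ep ?F C \<subseteq> induced ep ?T C"
    proof
      fix e assume e: "e \<in> induced ep ?F C"
      then have eF: "e \<in> ?F" and ends: "fst (ep e) \<in> C" "snd (ep e) \<in> C" unfolding induced_def by simp_all
      have "pt ?F (fst (ep e)) = C" using part_eq[OF FF_fin v(1)] ends(1) v(2) by simp
      then have "e \<in> core_edges ep c V ?F" using core_iff[OF FF_fin FF_E] eF ends(2) by simp
      then have "e \<in> ?T" using gseq_props(2) by blast
      then show "e \<in> induced ep ?T C" using ends unfolding induced_def by simp
    qed
    moreover have "finite (induced ep ?T C)" using gseq_fin[of r "Suc l"] unfolding induced_def by (rule finite_subset[rotated]) auto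
    ultimately show ?thesis using edge_connected_mono[OF ec0] by blast
  qed
  show ?thesis using compT compH ecC by simp
qed

lemma gseq_cong: "(\<And>k. k \<in> {1..i} \<Longrightarrow> r k = r' k) \<Longrightarrow> j \<le> Suc i \<Longrightarrow> gseq r j = gseq r' j"
proof (induction j)
  case 0 then show ?case by simp
next
  case (Suc j)
  have "sampled r s j = sampled r' s j" using Suc.prems by (intro sampled_cong) auto
  then show ?case using Suc by simp
qed

lemma act_cong: "(\<And>k. k \<in> {1..i} \<Longrightarrow> r k = r' k) \<Longrightarrow> act r i = act r' i"
proof -
  assume a: "\<And>k. k \<in> {1..i} \<Longrightarrow> r k = r' k"
  have "gseq r i = gseq r' i" using gseq_cong[of i r r' i] a by simp
  moreover have "gseq r (Suc i) = gseq r' (Suc i)" using gseq_cong[of i r r' "Suc i"] a by simp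
  moreover have "sampled r s i = sampled r' s i" using a by (rule sampled_cong)
  ultimately show ?thesis unfolding act_def FF_def by simp
qed

lemma act_big: "P \<in> act r i \<Longrightarrow> \<delta> \<le> card (boundary ep (gseq r (Suc i)) P)"
  using gseq_props(3)[of P r i] unfolding act_def by blast

lemma act_card: "card (act r i) \<le> card V"
proof -
  have "card (act r i) \<le> card (pt (FF r i) ` V)" unfolding act_def
    by (rule card_mono) (use finV in auto)
  also have "\<dots> \<le> card V" by (rule card_image_le[OF finV])
  finally show ?thesis .
qed

end

context lv begin

lemma progress:
  "3 * card (act r (Suc i)) \<le> 2 * card (act r i) +
     2 * card {P \<in> act r i. card (boundary ep (gseq r (Suc i)) P \<inter> r (Suc i) ` {1..s}) < 4 * c}"
proof -
  define F where "F = FF r i"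
  define T where "T = gseq r (Suc i)"
  define F' where "F' = FF r (Suc i)"
  define T' where "T' = gseq r (Suc (Suc i))"
  define Rs where "Rs = r (Suc i) ` {1..s}"
  define Old where "Old = act r i"
  have Old_def': "Old = {W \<in> pt F ` V. boundary ep T W \<noteq> {}}" unfolding Old_def act_def F_def T_def ..
  have finF: "finite F" "F \<subseteq> E" unfolding F_def using FF_fin FF_E by auto
  have finF': "finite F'" "F' \<subseteq> E" unfolding F'_def using FF_fin FF_E by auto
  have F'eq: "F' = sampled r s (Suc i) \<inter> T" unfolding F'_def T_def FF_def by simp
  have SS: "sampled r s i \<subseteq> sampled r s (Suc i)" "Rs \<subseteq> sampled r s (Suc i)"
    unfolding Rs_def using sampled_Suc[of r s i] by auto
  have T'T: "T' \<subseteq> T" unfolding T'_def T_def by (rule gseq_props(1))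
  have coreT: "core_edges ep c V F \<subseteq> T" unfolding F_def T_def by (rule gseq_props(2))
  have F'T: "F' \<subseteq> T" using F'eq by blast
  have TE: "T \<subseteq> E" unfolding T_def by (rule gseq_E)
  have act'_def: "act r (Suc i) = {W \<in> pt F' ` V. boundary ep T' W \<noteq> {}}"
    unfolding act_def F'_def T'_def ..
  have finOld: "finite Old" unfolding Old_def' using finV by simp
  have f2: "pt F v \<subseteq> pt F' v" if v: "v \<in> V" for v
  proof -
    have ec0: "ec (pt F v) F" by (rule part_ec[OF finF(1) v])
    have "induced ep F (pt F v) \<subseteq> induced ep F' (pt F v)"
    proof
      fix e assume e: "e \<in> induced ep F (pt F v)"
      then have eF: "e \<in> F" and ends: "fst (ep e) \<in> pt F v" "snd (ep e) \<in> pt F v"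
        unfolding induced_def by simp_all
      have "pt F (fst (ep e)) = pt F v" by (rule part_eq[OF finF(1) v ends(1)])
      then have "e \<in> core_edges ep c V F" using core_iff[OF finF] eF ends(2) by simp
      then have "e \<in> T" using coreT by blast
      moreover have "e \<in> sampled r s (Suc i)" using eF SS(1) unfolding F_def FF_def by blast
      ultimately show "e \<in> induced ep F' (pt F v)" using ends F'eq unfolding induced_def by simp
    qed
    moreover have "finite (induced ep F' (pt F v))" using finF'(1) unfolding induced_def by simp
    ultimately have "ec (pt F v) F'" using edge_connected_mono[OF ec0] by blast
    then show ?thesis using part_max[OF part_sub part_self[OF v]] by blast
  qed
  have f3: "pt F' v = pt F v" if v: "v \<in> V" and bd: "boundary ep T (pt F v) = {}" for v
  proof (rule ccontr)
    assume ne: "pt F' v \<noteq> pt F v"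
    let ?W = "pt F' v" and ?P = "pt F v"
    have "?P \<subseteq> ?W" by (rule f2[OF v])
    moreover have "?P \<noteq> {}" using part_self[OF v, of F] by auto
    ultimately have "c \<le> card (boundary ep (induced ep F' ?W) ?P)"
      using part_ec[OF finF'(1) v] ne unfolding edge_connected_def by simp
    moreover have "boundary ep (induced ep F' ?W) ?P \<subseteq> boundary ep T ?P"
      using F'T unfolding boundary_def induced_def by blast
    ultimately show False using bd c1 by simp
  qed
  define NewR where "NewR = (\<lambda>v. pt F' v) ` {v \<in> V. pt F v \<in> Old}"
  have finNewR: "finite NewR" unfolding NewR_def using finV by simp
  have NewR_mem: "pt F' v \<in> NewR" if "v \<in> V" "pt F v \<in> Old" for v
    unfolding NewR_def using that by blast
  have NewR_E: "\<exists>v. v \<in> V \<and> W = pt F' v \<and> pt F v \<in> Old" if "W \<in> NewR" for W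
    using that unfolding NewR_def by blast
  have f4: "act r (Suc i) \<subseteq> NewR"
  proof
    fix W assume "W \<in> act r (Suc i)"
    then obtain v where v: "v \<in> V" "W = pt F' v" and bdW: "boundary ep T' W \<noteq> {}"
      unfolding act'_def by blast
    show "W \<in> NewR"
    proof (cases "pt F v \<in> Old")
      case True then show ?thesis using NewR_mem v by simp
    next
      case False
      then have bd: "boundary ep T (pt F v) = {}" using v(1) unfolding Old_def' by blast
      then have "W = pt F v" using f3[OF v(1)] v(2) by simp
      then have "boundary ep T' W = {}" using bd T'T unfolding boundary_def by blast
      then show ?thesis using bdW by simp
    qed
  qed
  define k where "k = card NewR"
  have actk: "card (act r (Suc i)) \<le> k" unfolding k_def by (rule card_mono[OF finNewR f4])
  define U where "U = Old \<inter> (pt F' ` V)"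
  have UNewR: "U \<subseteq> NewR"
  proof
    fix P assume "P \<in> U"
    then obtain u w where P: "P \<in> Old" "u \<in> V" "P = pt F' u" "w \<in> V" "P = pt F w"
      unfolding U_def Old_def' by blast
    have "pt F u = P" using part_eq[OF finF(1) P(4)] part_self[OF P(2)] P by simp
    then show "P \<in> NewR" using NewR_mem[OF P(2)] P by simp
  qed
  have finU: "finite U" using finite_subset[OF UNewR finNewR] .
  define fib where "fib W = {P \<in> Old. P \<subseteq> W}" for W
  have f6: "2 * k \<le> card Old + card U"
  proof -
    have OldUN: "Old = (\<Union>W\<in>NewR. fib W)"
    proof
      show "Old \<subseteq> (\<Union>W\<in>NewR. fib W)"
      proof
        fix P assume P: "P \<in> Old"
        then obtain x where x: "x \<in> V" "P = pt F x" unfolding Old_def' by blast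
        have "pt F' x \<in> NewR" using NewR_mem[OF x(1)] P x(2) by simp
        moreover have "P \<in> fib (pt F' x)" unfolding fib_def using P f2[OF x(1)] x(2) by simp
        ultimately show "P \<in> (\<Union>W\<in>NewR. fib W)" by blast
      qed
      show "(\<Union>W\<in>NewR. fib W) \<subseteq> Old" unfolding fib_def by blast
    qed
    have fibdisj: "fib W1 \<inter> fib W2 = {}" if WW: "W1 \<in> NewR" "W2 \<in> NewR" "W1 \<noteq> W2" for W1 W2
    proof (rule ccontr)
      assume "fib W1 \<inter> fib W2 \<noteq> {}"
      then obtain P where P: "P \<in> Old" "P \<subseteq> W1" "P \<subseteq> W2" unfolding fib_def by blast
      then obtain x where x: "x \<in> V" "P = pt F x" unfolding Old_def' by blast
      have xP: "x \<in> P" using part_self[OF x(1)] x(2) by simp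
      obtain a where a: "a \<in> V" "W1 = pt F' a" using NewR_E[OF WW(1)] by blast
      obtain b where b: "b \<in> V" "W2 = pt F' b" using NewR_E[OF WW(2)] by blast
      have "W1 = W2" using part_disj[OF finF'(1) a(1) b(1), of x] a(2) b(2) xP P(2,3) by blast
      then show False using WW(3) by simp
    qed
    have finfib: "finite (fib W)" for W unfolding fib_def using finOld by simp
    have cardOld: "card Old = (\<Sum>W\<in>NewR. card (fib W))"
      unfolding OldUN by (rule card_UN_disjoint[OF finNewR]) (use finfib fibdisj in auto)
    have fib1: "1 \<le> card (fib W)" if "W \<in> U" for W
    proof -
      have "W \<in> fib W" unfolding fib_def using that U_def by simp
      then show ?thesis using finfib[of W] by (simp add: Suc_le_eq card_gt_0_iff) blast
    qed
    have fib2: "2 \<le> card (fib W)" if W: "W \<in> NewR - U" for W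
    proof -
      obtain v where v: "v \<in> V" "W = pt F' v" "pt F v \<in> Old" using NewR_E W by blast
      have WnO: "W \<notin> Old" using W v(1,2) unfolding U_def by blast
      have sub: "pt F v \<subseteq> W" using f2[OF v(1)] v(2) by simp
      have "pt F v \<noteq> W"
      proof
        assume "pt F v = W" then show False using WnO v(3) by simp
      qed
      then obtain u where u: "u \<in> W" "u \<notin> pt F v" using sub by blast
      have uV: "u \<in> V" using u(1) v(2) part_sub by blast
      have Wu: "pt F' u = W" using part_eq[OF finF'(1) v(1)] u(1) v(2) by simp
      have uOld: "pt F u \<in> Old"
      proof (rule ccontr)
        assume "pt F u \<notin> Old"
        then have "boundary ep T (pt F u) = {}" using uV unfolding Old_def' by blast
        then have "pt F' u = pt F u" by (rule f3[OF uV])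
        then have "W = pt F u" using Wu by simp
        moreover have "v \<in> W" using part_self[OF v(1), of F'] v(2) by simp
        ultimately have "v \<in> pt F u" by simp
        then have "pt F v = pt F u" by (rule part_eq[OF finF(1) uV])
        then show False using u(2) part_self[OF uV] by simp
      qed
      have "pt F u \<subseteq> W" using f2[OF uV] Wu by simp
      then have "{pt F v, pt F u} \<subseteq> fib W" unfolding fib_def using sub uOld v(3) by simp
      moreover have ne: "pt F v \<noteq> pt F u"
      proof
        assume "pt F v = pt F u"
        then have "u \<in> pt F v" using part_self[OF uV, of F] by simp
        then show False using u(2) by simp
      qed
      ultimately have "card {pt F v, pt F u} \<le> card (fib W)" by (intro card_mono[OF finfib])
      moreover have "card {pt F v, pt F u} = 2" using ne by simp
      ultimately show ?thesis by simp
    qed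
    have "(\<Sum>W\<in>NewR. card (fib W)) = (\<Sum>W\<in>NewR - U. card (fib W)) + (\<Sum>W\<in>U. card (fib W))"
      by (rule sum.subset_diff[OF UNewR finNewR])
    moreover have "(\<Sum>W\<in>NewR - U. card (fib W)) \<ge> (\<Sum>W\<in>NewR - U. 2)"
      by (rule sum_mono) (use fib2 in simp)
    moreover have "(\<Sum>W\<in>U. card (fib W)) \<ge> (\<Sum>W\<in>U. 1)"
      by (rule sum_mono) (use fib1 in simp)
    moreover have "k = card (NewR - U) + card U"
      unfolding k_def using card_Diff_subset[OF finU UNewR] card_mono[OF finNewR UNewR] by simp
    ultimately show ?thesis using cardOld by simp
  qed
  define Cross where "Cross = {e \<in> F'. \<exists>W1\<in>NewR. \<exists>W2\<in>NewR. W1 \<noteq> W2 \<and> fst (ep e) \<in> W1 \<and> snd (ep e) \<in> W2}"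
  have f7: "card Cross \<le> c * (k - 1)"
    unfolding Cross_def k_def
  proof (rule cross_bound[OF finF'(1) finNewR])
    show "\<forall>W\<in>NewR. W \<subseteq> V \<and> W \<noteq> {} \<and> ec W F'"
    proof
      fix W assume "W \<in> NewR"
      then obtain v where v: "v \<in> V" "W = pt F' v" using NewR_E by blast
      then show "W \<subseteq> V \<and> W \<noteq> {} \<and> ec W F'"
        using part_sub part_self[OF v(1)] part_ec[OF finF'(1) v(1)] by blast
    qed
    show "\<forall>W1\<in>NewR. \<forall>W2\<in>NewR. W1 \<noteq> W2 \<longrightarrow> W1 \<inter> W2 = {}"
    proof (intro ballI impI)
      fix W1 W2 assume W: "W1 \<in> NewR" "W2 \<in> NewR" "W1 \<noteq> W2"
      obtain a where a: "a \<in> V" "W1 = pt F' a" using NewR_E W(1) by blast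
      obtain b where b: "b \<in> V" "W2 = pt F' b" using NewR_E W(2) by blast
      show "W1 \<inter> W2 = {}"
      proof (rule ccontr)
        assume "W1 \<inter> W2 \<noteq> {}"
        then obtain x where "x \<in> W1" "x \<in> W2" by blast
        then have "W1 = W2" using part_disj[OF finF'(1) a(1) b(1), of x] a(2) b(2) by simp
        then show False using W(3) by simp
      qed
    qed
    show "\<forall>QQ0. QQ0 \<subseteq> NewR \<longrightarrow> 2 \<le> card QQ0 \<longrightarrow> \<not> ec (\<Union>QQ0) F'"
    proof (intro allI impI notI)
      fix QQ0 assume Q: "QQ0 \<subseteq> NewR" "2 \<le> card QQ0" and ecU: "ec (\<Union>QQ0) F'"
      obtain W1 W2 where W: "W1 \<in> QQ0" "W2 \<in> QQ0" "W1 \<noteq> W2"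
      proof -
        have fQ: "finite QQ0" using Q(2) by (metis card.infinite not_numeral_le_zero)
        have "\<not> card QQ0 \<le> Suc 0" using Q(2) by simp
        then have "\<not> (\<forall>a\<in>QQ0. \<forall>b\<in>QQ0. a = b)" using card_le_Suc0_iff_eq[OF fQ] by simp
        then obtain a b where "a \<in> QQ0" "b \<in> QQ0" "a \<noteq> b" by blast
        then show ?thesis by (rule that)
      qed
      obtain a where a: "a \<in> V" "W1 = pt F' a" using NewR_E W(1) Q(1) by blast
      obtain b where b: "b \<in> V" "W2 = pt F' b" using NewR_E W(2) Q(1) by blast
      have UV: "\<Union>QQ0 \<subseteq> V" using Q(1) NewR_E part_sub by blast
      have "a \<in> \<Union>QQ0" using W(1) a part_self by blast
      then have "\<Union>QQ0 \<subseteq> W1" using part_max[OF UV _ ecU] a(2) by blast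
      then have "b \<in> W1" using W(2) b part_self by blast
      then have "W1 = W2" using part_eq[OF finF'(1) a(1)] a(2) b(2) by simp
      then show False using W(3) by simp
    qed
  qed
  define Ur where "Ur = {P \<in> U. 4 * c \<le> card (boundary ep T P \<inter> Rs)}"
  define Poor where "Poor = {P \<in> Old. card (boundary ep T P \<inter> Rs) < 4 * c}"
  have finUr: "finite Ur" unfolding Ur_def using finU by simp
  have finPoor: "finite Poor" unfolding Poor_def using finOld by simp
  have f9: "card U \<le> card Ur + card Poor"
  proof -
    have "U \<subseteq> Ur \<union> Poor" unfolding Ur_def Poor_def U_def by auto
    then have "card U \<le> card (Ur \<union> Poor)" by (rule card_mono[rotated]) (use finUr finPoor in simp)
    also have "\<dots> \<le> card Ur + card Poor" by (rule card_Un_le)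
    finally show ?thesis .
  qed
  have finCross: "finite Cross" unfolding Cross_def using finF'(1) by simp
  define XA where "XA P = {e \<in> Cross. fst (ep e) \<in> P}" for P
  define XB where "XB P = {e \<in> Cross. snd (ep e) \<in> P}" for P
  have keyend: "pt F' x = P \<and> pt F' y \<in> NewR \<and> pt F' y \<noteq> P"
    if P: "P \<in> U" and xy: "x \<in> P" "y \<notin> P" "y \<in> V" and eT: "e \<in> T" and epe: "ep e = (x, y) \<or> ep e = (y, x)"
    for P x y e
  proof -
    obtain u w where Pu: "P \<in> Old" "u \<in> V" "P = pt F' u" "w \<in> V" "P = pt F w"
      using P unfolding U_def Old_def' by blast
    have xV: "x \<in> V" using xy(1) Pu(3) part_sub by blast
    have x1: "pt F' x = P" using part_eq[OF finF'(1) Pu(2)] xy(1) Pu(3) by simp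
    have x2: "pt F x = P" using part_eq[OF finF(1) Pu(4)] xy(1) Pu(5) by simp
    have xnot: "x \<notin> pt F y"
    proof
      assume "x \<in> pt F y"
      then have "pt F x = pt F y" by (rule part_eq[OF finF(1) xy(3)])
      then show False using x2 part_self[OF xy(3)] xy(2) by simp
    qed
    have "e \<in> boundary ep T (pt F y)"
      using eT epe xnot part_self[OF xy(3)] unfolding boundary_def by auto
    then have "pt F y \<in> Old" unfolding Old_def' using xy(3) by blast
    then have "pt F' y \<in> NewR" by (rule NewR_mem[OF xy(3)])
    moreover have "pt F' y \<noteq> P"
    proof
      assume "pt F' y = P" then show False using part_self[OF xy(3), of F'] xy(2) by simp
    qed
    ultimately show ?thesis using x1 by simp
  qed
  have Xsub: "boundary ep T P \<inter> Rs \<subseteq> XA P \<union> XB P" if P: "P \<in> U" for P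
  proof
    fix e assume e: "e \<in> boundary ep T P \<inter> Rs"
    then have eT: "e \<in> T" and cr: "(fst (ep e) \<in> P) \<noteq> (snd (ep e) \<in> P)" and eR: "e \<in> Rs"
      unfolding boundary_def by simp_all
    have eF': "e \<in> F'" using eT eR SS(2) F'eq by blast
    have eV: "fst (ep e) \<in> V" "snd (ep e) \<in> V" using eT TE ep_V by blast+
    have PN: "P \<in> NewR" using P UNewR by blast
    show "e \<in> XA P \<union> XB P"
    proof (cases "fst (ep e) \<in> P")
      case True
      then have "snd (ep e) \<notin> P" using cr by simp
      then have k: "pt F' (fst (ep e)) = P \<and> pt F' (snd (ep e)) \<in> NewR \<and> pt F' (snd (ep e)) \<noteq> P"
        using keyend[OF P True _ eV(2) eT] by simp
      have "e \<in> Cross" unfolding Cross_def using eF' k PN part_self[OF eV(2)] True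
        by (intro CollectI conjI bexI[of _ P] bexI[of _ "pt F' (snd (ep e))"]) auto
      then show ?thesis unfolding XA_def using True by simp
    next
      case False
      then have sP: "snd (ep e) \<in> P" using cr by simp
      then have k: "pt F' (snd (ep e)) = P \<and> pt F' (fst (ep e)) \<in> NewR \<and> pt F' (fst (ep e)) \<noteq> P"
        using keyend[OF P sP False eV(1) eT] by simp
      have "e \<in> Cross" unfolding Cross_def using eF' k PN part_self[OF eV(1)] sP
        by (intro CollectI conjI bexI[of _ "pt F' (fst (ep e))"] bexI[of _ P]) auto
      then show ?thesis unfolding XB_def using sP by simp
    qed
  qed
  have UrOld: "Ur \<subseteq> Old" unfolding Ur_def U_def by blast
  have Xdisj: "P1 \<inter> P2 = {}" if PP: "P1 \<in> Ur" "P2 \<in> Ur" "P1 \<noteq> P2" for P1 P2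
  proof (rule ccontr)
    assume "P1 \<inter> P2 \<noteq> {}"
    then obtain x where x: "x \<in> P1" "x \<in> P2" by blast
    obtain a where a: "a \<in> V" "P1 = pt F a" using PP(1) UrOld unfolding Old_def' by blast
    obtain b where b: "b \<in> V" "P2 = pt F b" using PP(2) UrOld unfolding Old_def' by blast
    have "P1 = P2" using part_disj[OF finF(1) a(1) b(1), of x] a(2) b(2) x by simp
    then show False using PP(3) by simp
  qed
  have sumA: "(\<Sum>P\<in>Ur. card (XA P)) \<le> card Cross"
  proof -
    have "(\<Sum>P\<in>Ur. card (XA P)) = card (\<Union>P\<in>Ur. XA P)"
      by (rule card_UN_disjoint[symmetric, OF finUr])
         (use finCross Xdisj in \<open>auto simp: XA_def\<close>)
    also have "\<dots> \<le> card Cross" by (rule card_mono[OF finCross]) (auto simp: XA_def)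
    finally show ?thesis .
  qed
  have sumB: "(\<Sum>P\<in>Ur. card (XB P)) \<le> card Cross"
  proof -
    have "(\<Sum>P\<in>Ur. card (XB P)) = card (\<Union>P\<in>Ur. XB P)"
      by (rule card_UN_disjoint[symmetric, OF finUr])
         (use finCross Xdisj in \<open>auto simp: XB_def\<close>)
    also have "\<dots> \<le> card Cross" by (rule card_mono[OF finCross]) (auto simp: XB_def)
    finally show ?thesis .
  qed
  have f8: "4 * c * card Ur \<le> 2 * card Cross"
  proof -
    have "4 * c * card Ur = (\<Sum>P\<in>Ur. 4 * c)" by simp
    also have "\<dots> \<le> (\<Sum>P\<in>Ur. card (XA P) + card (XB P))"
    proof (rule sum_mono)
      fix P assume P: "P \<in> Ur"
      then have "4 * c \<le> card (boundary ep T P \<inter> Rs)" unfolding Ur_def by simp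
      also have "\<dots> \<le> card (XA P \<union> XB P)"
        by (rule card_mono[OF _ Xsub]) (use finCross P in \<open>auto simp: XA_def XB_def Ur_def\<close>)
      also have "\<dots> \<le> card (XA P) + card (XB P)" by (rule card_Un_le)
      finally show "4 * c \<le> card (XA P) + card (XB P)" .
    qed
    also have "\<dots> = (\<Sum>P\<in>Ur. card (XA P)) + (\<Sum>P\<in>Ur. card (XB P))" by (rule sum.distrib)
    also have "\<dots> \<le> 2 * card Cross" using sumA sumB by simp
    finally show ?thesis .
  qed
  have "c * (4 * card Ur) \<le> c * (2 * (k - 1))" using f8 f7 by (simp add: algebra_simps)
  then have "4 * card Ur \<le> 2 * (k - 1)" using c1 by simp
  then have Urk: "2 * card Ur \<le> k" by simp
  have PoorEq: "Poor = {P \<in> act r i. card (boundary ep (gseq r (Suc i)) P \<inter> r (Suc i) ` {1..s}) < 4 * c}"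
    unfolding Poor_def Old_def T_def Rs_def ..
  have "3 * card (act r (Suc i)) \<le> 2 * card Old + 2 * card Poor"
    using actk f6 f9 Urk by linarith
  then show ?thesis unfolding PoorEq Old_def .
qed

end

lemma card_image_pairs:
  fixes f :: "nat \<Rightarrow> nat"
  assumes "finite J"
  shows "card J \<le> card (f ` J) + card {(j, k) \<in> J \<times> J. j \<noteq> k \<and> f j = f k}"
  using assms
proof (induction J rule: finite_induct)
  case empty then show ?case by simp
next
  case (insert x J)
  let ?P = "\<lambda>J. {(j, k) \<in> J \<times> J. j \<noteq> k \<and> f j = f k}"
  have finP: "finite (?P (insert x J))"
    by (rule finite_subset[of _ "insert x J \<times> insert x J"]) (use insert(1) in auto)
  have Pmono: "?P J \<subseteq> ?P (insert x J)" by blast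
  show ?case
  proof (cases "f x \<in> f ` J")
    case True
    then obtain y where y: "y \<in> J" "f y = f x" by force
    have xy: "x \<noteq> y" using y insert(2) by blast
    have "(x, y) \<in> ?P (insert x J)" using y xy by simp
    then have sub: "insert (x, y) (?P J) \<subseteq> ?P (insert x J)" using Pmono by (simp only: insert_subset)
    have nin: "(x, y) \<notin> ?P J" using insert(2) by simp
    have finPJ: "finite (?P J)" using finite_subset[OF Pmono finP] .
    have "card (insert (x, y) (?P J)) = card (?P J) + 1" using nin finPJ by simp
    moreover have "card (insert (x, y) (?P J)) \<le> card (?P (insert x J))" by (rule card_mono[OF finP sub])
    ultimately have "card (?P J) + 1 \<le> card (?P (insert x J))" by simp
    moreover have "f ` insert x J = f ` J" using True by (simp add: insert_absorb)
    ultimately show ?thesis using insert by simp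
  next
    case False
    have "card (f ` insert x J) = card (f ` J) + 1" using False insert(1) by simp
    moreover have "card (?P J) \<le> card (?P (insert x J))" by (rule card_mono[OF finP Pmono])
    ultimately show ?thesis using insert by simp
  qed
qed

lemma sum01: fixes g :: "nat \<Rightarrow> real"
  assumes "\<And>k. k \<in> K \<Longrightarrow> 0 \<le> g k \<and> g k \<le> 1" shows "\<bar>\<Sum>k\<in>K. g k\<bar> \<le> real (card K)"
proof -
  have "0 \<le> (\<Sum>k\<in>K. g k)" using assms by (intro sum_nonneg) blast
  moreover have "(\<Sum>k\<in>K. g k) \<le> (\<Sum>k\<in>K. 1)" using assms by (intro sum_mono) blast
  ultimately show ?thesis by simp
qed

lemma card_filter_real: "finite A \<Longrightarrow> real (card {x \<in> A. P x}) = (\<Sum>x\<in>A. if P x then 1 else 0)"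
  using sum.inter_filter[of A "\<lambda>_. (1::real)" P] by simp

lemma sum01s: fixes g :: "nat \<Rightarrow> real"
  assumes "\<And>k. 0 \<le> g k \<and> g k \<le> 1" shows "\<bar>\<Sum>k\<in>{1..s}. g k\<bar> \<le> real s"
  using sum01[of "{1..s}" g] assms by simp

context
  fixes Dd :: "(nat \<Rightarrow> nat) pmf" and s m :: nat and B :: "nat set"
  assumes pi: "pairwise_indep_uniform Dd s m" and B: "B \<subseteq> {1..m}"
begin

abbreviation "PR \<equiv> measure_pmf.prob Dd"

lemma finB: "finite B" using B finite_subset by blast

lemma piB1: "j \<in> {1..s} \<Longrightarrow> a \<in> B \<Longrightarrow> PR {f. f j = a} = 1 / real m"
  using pi B unfolding pairwise_indep_uniform_def by blast

lemma piB2: "j \<in> {1..s} \<Longrightarrow> k \<in> {1..s} \<Longrightarrow> j \<noteq> k \<Longrightarrow> a \<in> B \<Longrightarrow> b \<in> B \<Longrightarrow>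
   PR {f. f j = a \<and> f k = b} = 1 / (real m)^2"
  using pi B unfolding pairwise_indep_uniform_def by blast

lemma prob_in: assumes j: "j \<in> {1..s}" shows "PR {f. f j \<in> B} = real (card B) / real m"
proof -
  have eq: "{f. f j \<in> B} = (\<Union>a\<in>B. {f. f j = a})" by blast
  have "PR (\<Union>a\<in>B. {f. f j = a}) = (\<Sum>a\<in>B. PR {f. f j = a})"
    by (rule measure_pmf.finite_measure_finite_Union[OF finB]) (auto simp: disjoint_family_on_def)
  then have "PR {f. f j \<in> B} = (\<Sum>a\<in>B. PR {f. f j = a})" by (simp only: eq)
  also have "\<dots> = (\<Sum>a\<in>B. 1 / real m)"
    using j by (intro sum.cong refl) (simp add: piB1)
  finally show ?thesis by simp
qed

lemma prob_pair: assumes j: "j \<in> {1..s}" and k: "k \<in> {1..s}" "j \<noteq> k"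
  shows "PR {f. f j \<in> B \<and> f k \<in> B} = (real (card B) / real m)^2"
proof -
  have eq: "{f. f j \<in> B \<and> f k \<in> B} = (\<Union>ab\<in>B \<times> B. {f. f j = fst ab \<and> f k = snd ab})" by auto
  have "PR (\<Union>ab\<in>B \<times> B. {f. f j = fst ab \<and> f k = snd ab}) = (\<Sum>ab\<in>B \<times> B. PR {f. f j = fst ab \<and> f k = snd ab})"
    by (rule measure_pmf.finite_measure_finite_Union) (auto simp: disjoint_family_on_def finB)
  then have "PR {f. f j \<in> B \<and> f k \<in> B} = (\<Sum>ab\<in>B \<times> B. PR {f. f j = fst ab \<and> f k = snd ab})"
    by (simp only: eq)
  also have "\<dots> = (\<Sum>ab\<in>B \<times> B. 1 / (real m)^2)"
    using j k by (intro sum.cong refl) (auto simp add: piB2)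
  finally show ?thesis by (simp add: card_cartesian_product power2_eq_square)
qed

lemma prob_diag: assumes j: "j \<in> {1..s}" and k: "k \<in> {1..s}" "j \<noteq> k"
  shows "PR {f. f j = f k \<and> f j \<in> B} = real (card B) / (real m)^2"
proof -
  have eq: "{f. f j = f k \<and> f j \<in> B} = (\<Union>a\<in>B. {f. f j = a \<and> f k = a})" by auto
  have "PR (\<Union>a\<in>B. {f. f j = a \<and> f k = a}) = (\<Sum>a\<in>B. PR {f. f j = a \<and> f k = a})"
    by (rule measure_pmf.finite_measure_finite_Union) (auto simp: disjoint_family_on_def finB)
  then have "PR {f. f j = f k \<and> f j \<in> B} = (\<Sum>a\<in>B. PR {f. f j = a \<and> f k = a})"
    by (simp only: eq)
  also have "\<dots> = (\<Sum>a\<in>B. 1 / (real m)^2)"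
    using j k by (intro sum.cong refl) (auto simp add: piB2)
  finally show ?thesis by simp
qed

lemma intb: fixes g :: "(nat \<Rightarrow> nat) \<Rightarrow> real" assumes "\<And>f. \<bar>g f\<bar> \<le> C" shows "integrable Dd g"
  by (rule measure_pmf.integrable_const_bound[of _ C]) (use assms in auto)

lemma int_ind: "(\<integral>f. indicator A f \<partial>Dd) = PR A"
  by simp


definition "ZZ f = (\<Sum>j\<in>{1..s}. indicator {f. f j \<in> B} f :: real)"
definition "YY f = (\<Sum>j\<in>{1..s}. \<Sum>k\<in>{1..s}. if j \<noteq> k then indicator {f. f j = f k \<and> f j \<in> B} f else (0::real))"

lemma ZZ_bound: "0 \<le> ZZ f" "ZZ f \<le> real s"
proof -
  show "0 \<le> ZZ f" unfolding ZZ_def by (rule sum_nonneg) simp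
  have "ZZ f \<le> (\<Sum>j\<in>{1..s}. 1)" unfolding ZZ_def by (rule sum_mono) (simp add: indicator_def)
  then show "ZZ f \<le> real s" by simp
qed

lemma YY_bound: "0 \<le> YY f" "YY f \<le> real s * real s"
proof -
  show "0 \<le> YY f" unfolding YY_def by (intro sum_nonneg) simp
  have "YY f \<le> (\<Sum>j\<in>{1..s}. \<Sum>k\<in>{1..s}. 1)" unfolding YY_def by (intro sum_mono) (simp add: indicator_def)
  then show "YY f \<le> real s * real s" by simp
qed

lemma int_ZZ: "(\<integral>f. ZZ f \<partial>Dd) = real s * (real (card B) / real m)"
proof -
  have "(\<integral>f. ZZ f \<partial>Dd) = (\<Sum>j\<in>{1..s}. \<integral>f. indicator {f. f j \<in> B} f \<partial>Dd)"
    unfolding ZZ_def by (rule Bochner_Integration.integral_sum) (rule intb[of _ 1], simp add: indicator_def)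
  also have "\<dots> = (\<Sum>j\<in>{1..s}. real (card B) / real m)"
    by (intro sum.cong refl) (simp add: prob_in)
  finally show ?thesis by simp
qed

lemma int_ZZ2: "(\<integral>f. (ZZ f)^2 \<partial>Dd) = real s * (real s * (real (card B) / real m)^2
     + (real (card B) / real m - (real (card B) / real m)^2))"
proof -
  let ?q = "real (card B) / real m"
  have eq: "(ZZ f)^2 = (\<Sum>j\<in>{1..s}. \<Sum>k\<in>{1..s}. indicator ({f. f j \<in> B} \<inter> {f. f k \<in> B}) f)" for f
  proof -
    have "(ZZ f)^2 = (\<Sum>j\<in>{1..s}. \<Sum>k\<in>{1..s}. indicator {f. f j \<in> B} f * indicator {f. f k \<in> B} f)"
      unfolding ZZ_def power2_eq_square by (rule sum_product)
    also have "\<dots> = (\<Sum>j\<in>{1..s}. \<Sum>k\<in>{1..s}. indicator ({f. f j \<in> B} \<inter> {f. f k \<in> B}) f)"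
      by (simp only: indicator_inter_arith)
    finally show ?thesis .
  qed
  have "(\<integral>f. (ZZ f)^2 \<partial>Dd) = (\<Sum>j\<in>{1..s}. \<integral>f. (\<Sum>k\<in>{1..s}. indicator ({f. f j \<in> B} \<inter> {f. f k \<in> B}) f) \<partial>Dd)"
    unfolding eq by (rule Bochner_Integration.integral_sum) (rule intb[of _ "real s"], rule sum01s, simp add: indicator_def)
  also have "\<dots> = (\<Sum>j\<in>{1..s}. \<Sum>k\<in>{1..s}. PR ({f. f j \<in> B} \<inter> {f. f k \<in> B}))"
    by (intro sum.cong refl, subst Bochner_Integration.integral_sum) (auto intro: intb[of _ 1] simp: indicator_def)
  also have "\<dots> = (\<Sum>j\<in>{1..s}. \<Sum>k\<in>{1..s}. ?q^2 + (if j = k then ?q - ?q^2 else 0))"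
  proof (intro sum.cong refl)
    fix j k assume jk: "j \<in> {1..s}" "k \<in> {1..s}"
    show "PR ({f. f j \<in> B} \<inter> {f. f k \<in> B}) = ?q^2 + (if j = k then ?q - ?q^2 else 0)"
    proof (cases "j = k")
      case True then show ?thesis using prob_in[OF jk(1)] by simp
    next
      case False
      have "{f. f j \<in> B} \<inter> {f. f k \<in> B} = {f. f j \<in> B \<and> f k \<in> B}" by blast
      then show ?thesis using prob_pair[OF jk False] False by simp
    qed
  qed
  also have "\<dots> = (\<Sum>j\<in>{1..s}. real s * ?q^2 + (?q - ?q^2))"
    by (intro sum.cong refl) (simp add: sum.distrib)
  finally show ?thesis by simp
qed

lemma int_YY: "(\<integral>f. YY f \<partial>Dd) = real s * (real s - 1) * (real (card B) / (real m)^2)"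
proof -
  let ?r = "real (card B) / (real m)^2"
  have "(\<integral>f. YY f \<partial>Dd) = (\<Sum>j\<in>{1..s}. \<integral>f. (\<Sum>k\<in>{1..s}. if j \<noteq> k then indicator {f. f j = f k \<and> f j \<in> B} f else (0::real)) \<partial>Dd)"
    unfolding YY_def by (rule Bochner_Integration.integral_sum) (rule intb[of _ "real s"], rule sum01s, simp add: indicator_def)
  also have "\<dots> = (\<Sum>j\<in>{1..s}. \<Sum>k\<in>{1..s}. if j \<noteq> k then PR {f. f j = f k \<and> f j \<in> B} else 0)"
  proof (intro sum.cong refl)
    fix j assume "j \<in> {1..s}"
    have "(\<integral>f. (\<Sum>k\<in>{1..s}. if j \<noteq> k then indicator {f. f j = f k \<and> f j \<in> B} f else (0::real)) \<partial>Dd)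
       = (\<Sum>k\<in>{1..s}. \<integral>f. (if j \<noteq> k then indicator {f. f j = f k \<and> f j \<in> B} f else (0::real)) \<partial>Dd)"
      by (rule Bochner_Integration.integral_sum) (rule intb[of _ 1], simp add: indicator_def)
    also have "\<dots> = (\<Sum>k\<in>{1..s}. if j \<noteq> k then PR {f. f j = f k \<and> f j \<in> B} else 0)"
    proof (intro sum.cong refl)
      fix k show "(\<integral>f. (if j \<noteq> k then indicator {f. f j = f k \<and> f j \<in> B} f else (0::real)) \<partial>Dd)
        = (if j \<noteq> k then PR {f. f j = f k \<and> f j \<in> B} else 0)"
        by (cases "j = k") simp_all
    qed
    finally show "(\<integral>f. (\<Sum>k\<in>{1..s}. if j \<noteq> k then indicator {f. f j = f k \<and> f j \<in> B} f else (0::real)) \<partial>Dd)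
       = (\<Sum>k\<in>{1..s}. if j \<noteq> k then PR {f. f j = f k \<and> f j \<in> B} else 0)" .
  qed
  also have "\<dots> = (\<Sum>j\<in>{1..s}. \<Sum>k\<in>{1..s}. ?r - (if j = k then ?r else 0))"
    by (intro sum.cong refl) (auto simp: prob_diag)
  also have "\<dots> = (\<Sum>j\<in>{1..s}. real s * ?r - ?r)"
    by (intro sum.cong refl) (simp add: sum_subtractf)
  also have "\<dots> = real s * (real s - 1) * ?r" by (simp add: algebra_simps add_divide_distrib[symmetric])
  finally show ?thesis .
qed

lemma ZZ_card: "ZZ f = real (card {j \<in> {1..s}. f j \<in> B})"
proof -
  have a: "real (card {j \<in> {1..s}. f j \<in> B}) = (\<Sum>j\<in>{1..s}. if f j \<in> B then 1 else 0)"
    by (rule card_filter_real) simp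
  have b: "ZZ f = (\<Sum>j\<in>{1..s}. if f j \<in> B then 1 else 0)"
    unfolding ZZ_def by (intro sum.cong refl) (simp add: indicator_def)
  show ?thesis using a b by simp
qed

lemma YY_card: "YY f = real (card {(j, k) \<in> {j \<in> {1..s}. f j \<in> B} \<times> {j \<in> {1..s}. f j \<in> B}. j \<noteq> k \<and> f j = f k})"
proof -
  let ?J = "{j \<in> {1..s}. f j \<in> B}"
  have "YY f = (\<Sum>(j, k)\<in>{1..s} \<times> {1..s}. if j \<noteq> k then indicator {f. f j = f k \<and> f j \<in> B} f else (0::real))"
    unfolding YY_def by (rule sum.cartesian_product)
  also have "\<dots> = (\<Sum>x\<in>{1..s} \<times> {1..s}. if (fst x \<noteq> snd x \<and> f (fst x) = f (snd x) \<and> f (fst x) \<in> B) then 1 else (0::real))"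
    by (intro sum.cong refl) (auto simp: indicator_def)
  also have "\<dots> = real (card {x \<in> {1..s} \<times> {1..s}. fst x \<noteq> snd x \<and> f (fst x) = f (snd x) \<and> f (fst x) \<in> B})"
    by (rule card_filter_real[symmetric]) simp
  also have "{x \<in> {1..s} \<times> {1..s}. fst x \<noteq> snd x \<and> f (fst x) = f (snd x) \<and> f (fst x) \<in> B}
      = {(j, k) \<in> ?J \<times> ?J. j \<noteq> k \<and> f j = f k}" by auto
  finally show ?thesis .
qed

lemma card_img_ZY: "real (card (B \<inter> f ` {1..s})) \<ge> ZZ f - YY f"
proof -
  let ?J = "{j \<in> {1..s}. f j \<in> B}"
  have eq: "B \<inter> f ` {1..s} = f ` ?J" by auto
  have "card ?J \<le> card (f ` ?J) + card {(j, k) \<in> ?J \<times> ?J. j \<noteq> k \<and> f j = f k}"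
    by (rule card_image_pairs) simp
  then show ?thesis unfolding ZZ_card YY_card eq by linarith
qed

lemma poor_prob:
  fixes c \<delta> :: nat and p :: real
  assumes dB: "\<delta> \<le> card B" and sdef: "s = nat \<lceil>p * real m\<rceil>" and p0: "0 < p" and p1: "100 * p \<le> 1"
    and pd: "32 * real c \<le> p * real \<delta>" and c1: "1 \<le> c"
  shows "PR {f. card (B \<inter> f ` {1..s}) < 4 * c} \<le> 1/6"
proof -
  define b where "b = real (card B)"
  define q where "q = b / real m"
  define \<mu> where "\<mu> = real s * q"
  have cBm: "card B \<le> m" using card_mono[OF _ B] by simp
  have "p * real \<delta> \<le> (1/100) * real \<delta>" using p1 by (intro mult_right_mono) auto
  then have "real \<delta> \<ge> 3200 * real c" using pd by linarith
  then have d1: "real \<delta> \<ge> 1" using c1 by linarith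
  then have b1: "b \<ge> 1" unfolding b_def using dB by linarith
  have m1: "real m \<ge> b" unfolding b_def using cBm by simp
  have mpos: "real m > 0" using m1 b1 by linarith
  have pm0: "0 \<le> p * real m" using p0 by simp
  have s_ge: "real s \<ge> p * real m" unfolding sdef using pm0 by linarith
  have s_lt: "real s < p * real m + 1" unfolding sdef using pm0 by linarith
  have "p * real m > 0" using p0 mpos by simp
  then have spos: "real s > 0" using s_ge by linarith
  have mu_ge: "\<mu> \<ge> p * b"
  proof -
    have e: "\<mu> * real m = real s * b" unfolding \<mu>_def q_def using mpos by simp
    have "real s * b \<ge> p * real m * b" using s_ge b1 by (simp add: mult_right_mono)
    then have "(p * b) * real m \<le> \<mu> * real m" using e by (simp add: algebra_simps)
    then show ?thesis using mpos by (rule mult_right_le_imp_le)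
  qed
  have mu32: "\<mu> \<ge> 32 * real c"
  proof -
    have "p * b \<ge> p * real \<delta>" unfolding b_def using dB p0 by simp
    then show ?thesis using mu_ge pd by linarith
  qed
  have mupos: "\<mu> > 0" using mu32 c1 by linarith
  have iZ: "integrable Dd ZZ" by (rule intb[of _ "real s"]) (use ZZ_bound in auto)
  have iZ2: "integrable Dd (\<lambda>f. (ZZ f)^2)" 
    by (rule intb[of _ "real s * real s"]) (use ZZ_bound in \<open>auto simp: power2_eq_square intro: mult_mono\<close>)
  have eqv: "(\<lambda>f. (ZZ f - \<mu>)^2) = (\<lambda>f. (ZZ f)^2 + (\<mu>^2 - 2 * \<mu> * ZZ f))"
    by (rule ext) (simp add: power2_diff algebra_simps)
  have var: "(\<integral>f. (ZZ f - \<mu>)^2 \<partial>Dd) = real s * (q - q^2)"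
  proof -
    have "(\<integral>f. (ZZ f - \<mu>)^2 \<partial>Dd) = (\<integral>f. (ZZ f)^2 \<partial>Dd) + (\<integral>f. (\<mu>^2 - 2 * \<mu> * ZZ f) \<partial>Dd)"
      unfolding eqv by (rule Bochner_Integration.integral_add[OF iZ2]) (use iZ in simp)
    also have "(\<integral>f. (\<mu>^2 - 2 * \<mu> * ZZ f) \<partial>Dd) = \<mu>^2 - 2 * \<mu> * (\<integral>f. ZZ f \<partial>Dd)"
      using iZ by simp
    also have "(\<integral>f. (ZZ f)^2 \<partial>Dd) = real s * (real s * q^2 + (q - q^2))"
      using int_ZZ2 unfolding q_def b_def .
    also have "(\<integral>f. ZZ f \<partial>Dd) = real s * q" using int_ZZ unfolding q_def b_def .
    also have "real s * (real s * q^2 + (q - q^2)) + (\<mu>^2 - 2 * \<mu> * (real s * q)) = real s * (q - q^2)"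
      unfolding \<mu>_def by (simp add: power2_eq_square algebra_simps)
    finally show ?thesis .
  qed
  have var_le: "(\<integral>f. (ZZ f - \<mu>)^2 \<partial>Dd) \<le> \<mu>"
  proof -
    have "0 \<le> real s * q^2" using spos by simp
    then have "real s * (q - q^2) \<le> \<mu>" unfolding \<mu>_def by (simp add: algebra_simps)
    then show ?thesis using var by linarith
  qed
  have iV: "integrable Dd (\<lambda>f. (ZZ f - \<mu>)^2)" unfolding eqv using iZ2 iZ by simp
  have P1: "PR {f. ZZ f < \<mu> / 2} \<le> 1/8"
  proof -
    have "PR {f. ZZ f < \<mu> / 2} \<le> PR {f \<in> space (measure_pmf Dd). \<mu>^2 / 4 \<le> (ZZ f - \<mu>)^2}"
    proof (rule measure_pmf.finite_measure_mono)
      show "{f. ZZ f < \<mu> / 2} \<subseteq> {f \<in> space (measure_pmf Dd). \<mu>^2 / 4 \<le> (ZZ f - \<mu>)^2}"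
      proof
        fix f assume "f \<in> {f. ZZ f < \<mu> / 2}"
        then have "\<mu> - ZZ f \<ge> \<mu> / 2" by simp
        then have "(\<mu> / 2)^2 \<le> (\<mu> - ZZ f)^2" using mupos by (intro power_mono) auto
        then show "f \<in> {f \<in> space (measure_pmf Dd). \<mu>^2 / 4 \<le> (ZZ f - \<mu>)^2}"
          by (simp add: power2_commute power_divide)
      qed
    qed simp
    also have "\<dots> \<le> (\<integral>f. (ZZ f - \<mu>)^2 \<partial>Dd) / (\<mu>^2 / 4)"
      by (rule integral_Markov_inequality_measure[OF iV]) (use mupos in auto)
    also have "\<dots> \<le> \<mu> / (\<mu>^2 / 4)"
      by (rule divide_right_mono[OF var_le]) simp
    also have "\<dots> = 4 / \<mu>" using mupos by (simp add: power2_eq_square field_simps)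
    also have "\<dots> \<le> 4 / 32" using mu32 c1 by (intro divide_left_mono) auto
    finally show ?thesis by simp
  qed
  have iY: "integrable Dd YY" by (rule intb[of _ "real s * real s"]) (use YY_bound in auto)
  have P2: "PR {f. \<mu> / 4 \<le> YY f} \<le> 1/25"
  proof -
    have "PR {f. \<mu> / 4 \<le> YY f} = PR {f \<in> space (measure_pmf Dd). \<mu> / 4 \<le> YY f}" by simp
    also have "\<dots> \<le> (\<integral>f. YY f \<partial>Dd) / (\<mu> / 4)"
      by (rule integral_Markov_inequality_measure[OF iY]) (use mupos YY_bound in auto)
    also have "\<dots> = 4 * (real s - 1) / real m"
      unfolding int_YY \<mu>_def q_def b_def using spos mpos b1 unfolding b_def
      by (simp add: field_simps power2_eq_square)
    also have "\<dots> \<le> 4 * p"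
    proof -
      have "real s - 1 \<le> p * real m" using s_lt by linarith
      then have "(real s - 1) / real m \<le> p" using mpos by (simp add: divide_le_eq)
      moreover have "4 * (real s - 1) / real m = 4 * ((real s - 1) / real m)" by (rule times_divide_eq_right[symmetric])
      ultimately show ?thesis by linarith
    qed
    also have "\<dots> \<le> 1/25" using p1 by simp
    finally show ?thesis .
  qed
  have sub: "{f. card (B \<inter> f ` {1..s}) < 4 * c} \<subseteq> {f. ZZ f < \<mu> / 2} \<union> {f. \<mu> / 4 \<le> YY f}"
  proof
    fix f assume f: "f \<in> {f. card (B \<inter> f ` {1..s}) < 4 * c}"
    show "f \<in> {f. ZZ f < \<mu> / 2} \<union> {f. \<mu> / 4 \<le> YY f}"
    proof (rule ccontr)
      assume "f \<notin> {f. ZZ f < \<mu> / 2} \<union> {f. \<mu> / 4 \<le> YY f}"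
      then have "ZZ f \<ge> \<mu> / 2" "YY f < \<mu> / 4" by auto
      then have "real (card (B \<inter> f ` {1..s})) > \<mu> / 4" using card_img_ZY[of f] by linarith
      moreover have "real (card (B \<inter> f ` {1..s})) < 4 * real c" using f by simp
      ultimately show False using mu32 by linarith
    qed
  qed
  have "PR {f. card (B \<inter> f ` {1..s}) < 4 * c} \<le> PR ({f. ZZ f < \<mu> / 2} \<union> {f. \<mu> / 4 \<le> YY f})"
    by (rule measure_pmf.finite_measure_mono[OF sub]) simp
  also have "\<dots> \<le> PR {f. ZZ f < \<mu> / 2} + PR {f. \<mu> / 4 \<le> YY f}"
    by (rule measure_Un_le) simp_all
  also have "\<dots> \<le> 1/8 + 1/25" using P1 P2 by linarith
  finally show ?thesis by simp
qed

end

context lv begin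

lemma intbD: fixes g :: "(nat \<Rightarrow> nat) \<Rightarrow> real" and Dd :: "(nat \<Rightarrow> nat) pmf"
  assumes "\<And>f. \<bar>g f\<bar> \<le> C" shows "integrable Dd g"
  by (rule measure_pmf.integrable_const_bound[of _ C]) (use assms in auto)

lemma inner_bound:
  fixes p :: real and Dd :: "(nat \<Rightarrow> nat) pmf"
  assumes pi: "pairwise_indep_uniform Dd s m" and sdef: "s = nat \<lceil>p * real m\<rceil>" and p0: "0 < p"
    and p1: "100 * p \<le> 1" and pd: "32 * real c \<le> p * real \<delta>"
  shows "(\<integral>y. real (card (act (f(Suc i := y)) (Suc i))) \<partial>Dd) \<le> 7/9 * real (card (act f i))"
proof -
  let ?A = "act f i"
  let ?T = "gseq f (Suc i)"
  let ?Q = "\<lambda>P y. card (boundary ep ?T P \<inter> y ` {1..s}) < 4 * c"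
  have finA: "finite ?A" unfolding act_def using finV by simp
  have pw: "3 * card (act (f(Suc i := y)) (Suc i)) \<le> 2 * card ?A + 2 * card {P \<in> ?A. ?Q P y}" for y
  proof -
    have e1: "act (f(Suc i := y)) i = ?A" by (rule act_cong) auto
    have e2: "gseq (f(Suc i := y)) (Suc i) = ?T" by (rule gseq_cong[of i]) auto
    show ?thesis using progress[of "f(Suc i := y)" i] unfolding e1 e2 by simp
  qed
  have cardQ: "real (card {P \<in> ?A. ?Q P y}) = (\<Sum>P\<in>?A. indicator {y. ?Q P y} y)" for y
  proof -
    have "real (card {P \<in> ?A. ?Q P y}) = (\<Sum>P\<in>?A. if ?Q P y then 1 else 0)"
      by (rule card_filter_real[OF finA])
    also have "\<dots> = (\<Sum>P\<in>?A. indicator {y. ?Q P y} y)"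
      by (intro sum.cong refl) (simp add: indicator_def)
    finally show ?thesis .
  qed
  have iQ: "integrable Dd (\<lambda>y. real (card {P \<in> ?A. ?Q P y}))"
    by (rule intbD[of _ "real (card ?A)"]) (simp add: card_mono[OF finA])
  have iAct: "integrable Dd (\<lambda>y. real (card (act (f(Suc i := y)) (Suc i))))"
    by (rule intbD[of _ "real (card V)"]) (simp add: act_card)
  have intQ: "(\<integral>y. real (card {P \<in> ?A. ?Q P y}) \<partial>Dd) \<le> real (card ?A) / 6"
  proof -
    have "(\<integral>y. real (card {P \<in> ?A. ?Q P y}) \<partial>Dd) = (\<integral>y. (\<Sum>P\<in>?A. indicator {y. ?Q P y} y) \<partial>Dd)"
      using cardQ by simp
    also have "\<dots> = (\<Sum>P\<in>?A. \<integral>y. indicator {y. ?Q P y} y \<partial>Dd)"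
      by (rule Bochner_Integration.integral_sum) (rule intbD[of _ 1], simp add: indicator_def)
    also have "\<dots> = (\<Sum>P\<in>?A. measure_pmf.prob Dd {y. ?Q P y})" by simp
    also have "\<dots> \<le> (\<Sum>P\<in>?A. 1/6)"
    proof (rule sum_mono)
      fix P assume P: "P \<in> ?A"
      have BE: "boundary ep ?T P \<subseteq> {1..m}" using gseq_E[of f "Suc i"] unfolding boundary_def by blast
      show "measure_pmf.prob Dd {y. ?Q P y} \<le> 1/6"
        by (rule poor_prob[OF pi BE act_big[OF P] sdef p0 p1 pd c1])
    qed
    finally show ?thesis by simp
  qed
  have "(\<integral>y. real (card (act (f(Suc i := y)) (Suc i))) \<partial>Dd)
      \<le> (\<integral>y. (2/3 * real (card ?A) + 2/3 * real (card {P \<in> ?A. ?Q P y})) \<partial>Dd)"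
  proof (rule integral_mono[OF iAct])
    show "integrable Dd (\<lambda>y. 2/3 * real (card ?A) + 2/3 * real (card {P \<in> ?A. ?Q P y}))"
      using iQ by simp
    fix y show "real (card (act (f(Suc i := y)) (Suc i))) \<le> 2/3 * real (card ?A) + 2/3 * real (card {P \<in> ?A. ?Q P y})"
      using pw[of y] by linarith
  qed
  also have "\<dots> = 2/3 * real (card ?A) + 2/3 * (\<integral>y. real (card {P \<in> ?A. ?Q P y}) \<partial>Dd)"
    using iQ by simp
  also have "\<dots> \<le> 2/3 * real (card ?A) + 2/3 * (real (card ?A) / 6)" using intQ by simp
  also have "\<dots> = 7/9 * real (card ?A)" by simp
  finally show ?thesis .
qed

end

context lv begin

lemma exp_bound:
  fixes p :: real and D :: "nat \<Rightarrow> (nat \<Rightarrow> nat) pmf"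
  assumes pi: "\<forall>i\<in>{1..l}. pairwise_indep_uniform (D i) s m" and sdef: "s = nat \<lceil>p * real m\<rceil>" and p0: "0 < p"
    and p1: "100 * p \<le> 1" and pd: "32 * real c \<le> p * real \<delta>"
  shows "i \<le> l \<Longrightarrow> (\<integral>\<^sup>+r. ennreal (real (card (act r i))) \<partial>Pi_pmf {1..i} (\<lambda>_. 0) D)
      \<le> ennreal ((7/9)^i * real (card V))"
proof (induction i)
  case 0
  have "(\<integral>\<^sup>+r. ennreal (real (card (act r 0))) \<partial>Pi_pmf {1..0} (\<lambda>_. 0) D)
      \<le> (\<integral>\<^sup>+r. ennreal (real (card V)) \<partial>Pi_pmf {1..0} (\<lambda>_. 0) D)"
    by (rule nn_integral_mono) (simp add: act_card)
  also have "\<dots> = ennreal (real (card V))" by simp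
  finally show ?case by simp
next
  case (Suc i)
  let ?P = "Pi_pmf {1..i} (\<lambda>_. 0) D"
  have set: "{1..Suc i} = insert (Suc i) {1..i}" by auto
  have PiS: "Pi_pmf {1..Suc i} (\<lambda>_. 0) D = bind_pmf ?P (\<lambda>f. bind_pmf (D (Suc i)) (\<lambda>y. return_pmf (f(Suc i := y))))"
    unfolding set by (subst Pi_pmf_insert') (auto intro: bind_commute_pmf)
  have piS: "pairwise_indep_uniform (D (Suc i)) s m" using pi Suc.prems by simp
  have inner: "(\<integral>\<^sup>+y. ennreal (real (card (act (f(Suc i := y)) (Suc i)))) \<partial>D (Suc i))
      \<le> ennreal (7/9 * real (card (act f i)))" for f
  proof -
    have iAct: "integrable (D (Suc i)) (\<lambda>y. real (card (act (f(Suc i := y)) (Suc i))))"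
      by (rule intbD[of _ "real (card V)"]) (simp add: act_card)
    have "(\<integral>\<^sup>+y. ennreal (real (card (act (f(Suc i := y)) (Suc i)))) \<partial>D (Suc i))
        = ennreal (\<integral>y. real (card (act (f(Suc i := y)) (Suc i))) \<partial>D (Suc i))"
      by (rule nn_integral_eq_integral[OF iAct]) simp
    also have "\<dots> \<le> ennreal (7/9 * real (card (act f i)))"
      by (rule ennreal_leI, rule inner_bound[OF piS sdef p0 p1 pd])
    finally show ?thesis .
  qed
  have "(\<integral>\<^sup>+r. ennreal (real (card (act r (Suc i)))) \<partial>Pi_pmf {1..Suc i} (\<lambda>_. 0) D)
      = (\<integral>\<^sup>+f. (\<integral>\<^sup>+y. ennreal (real (card (act (f(Suc i := y)) (Suc i)))) \<partial>D (Suc i)) \<partial>?P)"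
    unfolding PiS by simp
  also have "\<dots> \<le> (\<integral>\<^sup>+f. ennreal (7/9) * ennreal (real (card (act f i))) \<partial>?P)"
  proof (rule nn_integral_mono)
    fix f
    have eq: "ennreal (7/9 * real (card (act f i))) = ennreal (7/9) * ennreal (real (card (act f i)))"
      by (rule ennreal_mult) auto
    show "(\<integral>\<^sup>+y. ennreal (real (card (act (f(Suc i := y)) (Suc i)))) \<partial>D (Suc i))
        \<le> ennreal (7/9) * ennreal (real (card (act f i)))"
      using inner[of f] unfolding eq .
  qed
  also have "\<dots> = ennreal (7/9) * (\<integral>\<^sup>+f. ennreal (real (card (act f i))) \<partial>?P)"
    by (rule nn_integral_cmult) simp
  also have "\<dots> \<le> ennreal (7/9) * ennreal ((7/9)^i * real (card V))"
    by (rule mult_left_mono[OF Suc.IH]) (use Suc.prems in simp_all)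
  also have "\<dots> = ennreal ((7/9)^(Suc i) * real (card V))"
    by (simp add: ennreal_mult[symmetric] algebra_simps)
  finally show ?case .
qed

end

lemma pow_bound:
  fixes \<gamma> :: real and n l :: nat
  assumes g: "\<gamma> > 0" and n1: "1 \<le> n" and l: "(\<gamma> + 1) * ln (real n) / ln (9/7) \<le> real l"
  shows "(7/9)^l * real n \<le> real n powr (-\<gamma>)"
proof -
  have npos: "real n > 0" using n1 by simp
  have ln97: "ln (9/7::real) > 0" by simp
  have "(\<gamma> + 1) * ln (real n) \<le> real l * ln (9/7)" using l ln97 by (simp add: divide_le_eq)
  then have "exp ((\<gamma> + 1) * ln (real n)) \<le> exp (real l * ln (9/7))" by simp
  moreover have "exp ((\<gamma> + 1) * ln (real n)) = real n powr (\<gamma> + 1)" using npos by (simp add: powr_def)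
  moreover have "exp (real l * ln (9/7)) = (9/7::real)^l"
    by (subst powr_realpow[symmetric]) (simp_all add: powr_def)
  ultimately have A: "real n powr (\<gamma> + 1) \<le> (9/7)^l" by simp
  have pos: "real n powr (\<gamma> + 1) > 0" using npos by simp
  have "(7/9::real)^l = 1 / (9/7)^l" by (simp add: power_divide)
  then have "(7/9)^l * real n = real n / (9/7)^l" by simp
  also have "\<dots> \<le> real n / real n powr (\<gamma> + 1)"
    using A pos npos by (intro divide_left_mono) auto
  also have "\<dots> = real n powr 1 / real n powr (\<gamma> + 1)" using npos by simp
  also have "\<dots> = real n powr (1 - (\<gamma> + 1))" by (rule powr_diff[symmetric])
  also have "\<dots> = real n powr (-\<gamma>)" by simp
  finally show ?thesis .
qed

theorem lemma4:
  fixes \<gamma> :: real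
  assumes "\<gamma> > 0"
  shows "\<exists>K Cst :: real. \<exists>lf :: nat \<Rightarrow> nat.
    (\<forall>n. 1 \<le> lf n) \<and> (\<forall>n\<ge>2. real (lf n) \<le> K * ln (real n)) \<and>
    (\<forall>(V :: nat set) (ep :: nat \<Rightarrow> nat \<times> nat) (m :: nat) (c :: nat) (\<delta> :: nat) (p :: real)
       (D :: nat \<Rightarrow> (nat \<Rightarrow> nat) pmf).
       let n = card V; l = lf n; s = nat \<lceil>p * real m\<rceil> in
       finite V \<longrightarrow> V \<noteq> {} \<longrightarrow>
       (\<forall>e\<in>{1..m}. fst (ep e) \<in> V \<and> snd (ep e) \<in> V \<and> fst (ep e) \<noteq> snd (ep e)) \<longrightarrow>
       1 \<le> c \<longrightarrow> c < \<delta> \<longrightarrow> 0 < p \<longrightarrow> p < 1 \<longrightarrow>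
       (\<forall>i\<in>{1..l}. pairwise_indep_uniform (D i) s m) \<longrightarrow>
       p * real l < 1 \<longrightarrow> 32 * real c \<le> p * real \<delta> \<longrightarrow>
       measure_pmf.prob (Pi_pmf {1..l} (\<lambda>_. 0) D)
         {r. \<forall>Gs Hs. level_run ep V m c \<delta> s l r Gs Hs \<longrightarrow>
               (\<forall>C \<in> components ep V (Gs l). edge_connected ep c C (induced ep (Gs l) C)) \<and>
               components ep V (Gs l) = components ep V (Hs l)}
         \<ge> 1 - Cst * real n powr (- \<gamma>))"
proof -
  define K where "K = 101 / ln 2 + (\<gamma> + 1) / ln (9/7)"
  define lf where "lf n = 100 + nat \<lceil>(\<gamma> + 1) * ln (real n) / ln (9/7)\<rceil>" for n :: nat
  have ln97: "ln (9/7::real) > 0" by simp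
  have lf1: "\<forall>n. 1 \<le> lf n" unfolding lf_def by simp
  have lfK: "\<forall>n\<ge>2. real (lf n) \<le> K * ln (real n)"
  proof (intro allI impI)
    fix n :: nat assume n2: "2 \<le> n"
    define L where "L = ln (real n)"
    have L2: "L \<ge> ln 2" unfolding L_def using n2 by simp
    have ln2: "ln (2::real) > 0" by simp
    have L0: "L \<ge> 0" using L2 ln2 by linarith
    have x0: "(\<gamma> + 1) * L / ln (9/7) \<ge> 0"
      using L0 assms ln97 by (intro divide_nonneg_pos mult_nonneg_nonneg) auto
    have "real (lf n) = 100 + real (nat \<lceil>(\<gamma> + 1) * L / ln (9/7)\<rceil>)" unfolding lf_def L_def by simp
    also have "\<dots> \<le> 101 + (\<gamma> + 1) * L / ln (9/7)" using x0 by linarith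
    also have "101 \<le> 101 * L / ln 2" using L2 ln2 by (simp add: le_divide_eq)
    then have "101 + (\<gamma> + 1) * L / ln (9/7) \<le> K * L" unfolding K_def by (simp add: algebra_simps)
    finally show "real (lf n) \<le> K * ln (real n)" unfolding L_def .
  qed
  have main: "\<forall>(V :: nat set) (ep :: nat \<Rightarrow> nat \<times> nat) (m :: nat) (c :: nat) (\<delta> :: nat) (p :: real)
       (D :: nat \<Rightarrow> (nat \<Rightarrow> nat) pmf).
       let n = card V; l = lf n; s = nat \<lceil>p * real m\<rceil> in
       finite V \<longrightarrow> V \<noteq> {} \<longrightarrow>
       (\<forall>e\<in>{1..m}. fst (ep e) \<in> V \<and> snd (ep e) \<in> V \<and> fst (ep e) \<noteq> snd (ep e)) \<longrightarrow>
       1 \<le> c \<longrightarrow> c < \<delta> \<longrightarrow> 0 < p \<longrightarrow> p < 1 \<longrightarrow>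
       (\<forall>i\<in>{1..l}. pairwise_indep_uniform (D i) s m) \<longrightarrow>
       p * real l < 1 \<longrightarrow> 32 * real c \<le> p * real \<delta> \<longrightarrow>
       measure_pmf.prob (Pi_pmf {1..l} (\<lambda>_. 0) D)
         {r. \<forall>Gs Hs. level_run ep V m c \<delta> s l r Gs Hs \<longrightarrow>
               (\<forall>C \<in> components ep V (Gs l). edge_connected ep c C (induced ep (Gs l) C)) \<and>
               components ep V (Gs l) = components ep V (Hs l)}
         \<ge> 1 - 1 * real n powr (- \<gamma>)"
  proof (intro allI)
    fix V :: "nat set" and ep :: "nat \<Rightarrow> nat \<times> nat" and m c \<delta> :: nat and p :: real
      and D :: "nat \<Rightarrow> (nat \<Rightarrow> nat) pmf"
    define n where "n = card V"
    define l where "l = lf n"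
    define s where "s = nat \<lceil>p * real m\<rceil>"
    show "let n = card V; l = lf n; s = nat \<lceil>p * real m\<rceil> in
       finite V \<longrightarrow> V \<noteq> {} \<longrightarrow>
       (\<forall>e\<in>{1..m}. fst (ep e) \<in> V \<and> snd (ep e) \<in> V \<and> fst (ep e) \<noteq> snd (ep e)) \<longrightarrow>
       1 \<le> c \<longrightarrow> c < \<delta> \<longrightarrow> 0 < p \<longrightarrow> p < 1 \<longrightarrow>
       (\<forall>i\<in>{1..l}. pairwise_indep_uniform (D i) s m) \<longrightarrow>
       p * real l < 1 \<longrightarrow> 32 * real c \<le> p * real \<delta> \<longrightarrow>
       measure_pmf.prob (Pi_pmf {1..l} (\<lambda>_. 0) D)
         {r. \<forall>Gs Hs. level_run ep V m c \<delta> s l r Gs Hs \<longrightarrow>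
               (\<forall>C \<in> components ep V (Gs l). edge_connected ep c C (induced ep (Gs l) C)) \<and>
               components ep V (Gs l) = components ep V (Hs l)}
         \<ge> 1 - 1 * real n powr (- \<gamma>)"
      unfolding Let_def n_def[symmetric] l_def[symmetric] s_def[symmetric]
    proof (intro impI)
      assume finV: "finite V" and Vne: "V \<noteq> {}"
        and edges: "\<forall>e\<in>{1..m}. fst (ep e) \<in> V \<and> snd (ep e) \<in> V \<and> fst (ep e) \<noteq> snd (ep e)"
        and c1: "1 \<le> c" and cd: "c < \<delta>" and p0: "0 < p" and p1': "p < 1"
        and pi: "\<forall>i\<in>{1..l}. pairwise_indep_uniform (D i) s m"
        and pl: "p * real l < 1" and pd: "32 * real c \<le> p * real \<delta>"
      interpret lv ep V m c \<delta> s
        by unfold_locales (use finV edges c1 in auto)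
      have l100: "real l \<ge> 100" unfolding l_def lf_def by simp
      have "100 * p \<le> p * real l" using l100 p0 by (simp add: mult_left_mono mult.commute)
      then have p1: "100 * p \<le> 1" using pl by linarith
      let ?M = "Pi_pmf {1..l} (\<lambda>_. 0) D"
      have eb: "(\<integral>\<^sup>+r. ennreal (real (card (act r l))) \<partial>?M) \<le> ennreal ((7/9)^l * real n)"
        using exp_bound[OF pi s_def p0 p1 pd, of l] n_def by simp
      have "emeasure ?M {r. act r l \<noteq> {}} = (\<integral>\<^sup>+r. indicator {r. act r l \<noteq> {}} r \<partial>?M)" by simp
      also have "\<dots> \<le> (\<integral>\<^sup>+r. ennreal (real (card (act r l))) \<partial>?M)"
      proof (rule nn_integral_mono)
        fix r
        have "finite (act r l)" unfolding act_def using finV by simp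
        then have "act r l \<noteq> {} \<Longrightarrow> 1 \<le> card (act r l)" by (simp add: Suc_le_eq card_gt_0_iff)
        then show "indicator {r. act r l \<noteq> {}} r \<le> ennreal (real (card (act r l)))"
          by (auto simp: indicator_def)
      qed
      also note eb
      finally have "emeasure ?M {r. act r l \<noteq> {}} \<le> ennreal ((7/9)^l * real n)" .
      then have bad: "measure_pmf.prob ?M {r. act r l \<noteq> {}} \<le> (7/9)^l * real n"
        by (simp add: measure_pmf.emeasure_eq_measure)
      have sub: "{r. act r l = {}} \<subseteq> {r. \<forall>Gs Hs. level_run ep V m c \<delta> s l r Gs Hs \<longrightarrow>
               (\<forall>C \<in> components ep V (Gs l). edge_connected ep c C (induced ep (Gs l) C)) \<and>
               components ep V (Gs l) = components ep V (Hs l)}"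
      proof (intro subsetI CollectI allI impI)
        fix r Gs Hs assume r: "r \<in> {r. act r l = {}}" and lr: "level_run ep V m c \<delta> s l r Gs Hs"
        have eq: "Gs l = gseq r (Suc l) \<and> Hs l = core_edges ep c V (FF r l)"
          by (rule level_run_eq[OF lr]) simp
        show "(\<forall>C \<in> components ep V (Gs l). edge_connected ep c C (induced ep (Gs l) C)) \<and>
               components ep V (Gs l) = components ep V (Hs l)"
          using good[of r l] r eq by simp
      qed
      have "measure_pmf.prob ?M {r. act r l = {}} = 1 - measure_pmf.prob ?M {r. act r l \<noteq> {}}"
      proof -
        have "{r. act r l = {}} = space (measure_pmf ?M) - {r. act r l \<noteq> {}}" by auto
        then show ?thesis using measure_pmf.prob_compl[of "{r. act r l \<noteq> {}}" ?M] by simp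
      qed
      also have "\<dots> \<ge> 1 - (7/9)^l * real n" using bad by simp
      moreover have "measure_pmf.prob ?M {r. act r l = {}} \<le> measure_pmf.prob ?M {r. \<forall>Gs Hs. level_run ep V m c \<delta> s l r Gs Hs \<longrightarrow>
               (\<forall>C \<in> components ep V (Gs l). edge_connected ep c C (induced ep (Gs l) C)) \<and>
               components ep V (Gs l) = components ep V (Hs l)}"
        by (rule measure_pmf.finite_measure_mono[OF sub]) simp
      moreover have "(7/9)^l * real n \<le> real n powr (-\<gamma>)"
      proof (rule pow_bound[OF assms])
        show "1 \<le> n" unfolding n_def using finV Vne by (simp add: Suc_le_eq card_gt_0_iff)
        have "(\<gamma> + 1) * ln (real n) / ln (9/7) \<le> real (nat \<lceil>(\<gamma> + 1) * ln (real n) / ln (9/7)\<rceil>)"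
          by linarith
        then show "(\<gamma> + 1) * ln (real n) / ln (9/7) \<le> real l" unfolding l_def lf_def by simp
      qed
      ultimately show "1 - 1 * real n powr (- \<gamma>) \<le> measure_pmf.prob ?M {r. \<forall>Gs Hs. level_run ep V m c \<delta> s l r Gs Hs \<longrightarrow>
               (\<forall>C \<in> components ep V (Gs l). edge_connected ep c C (induced ep (Gs l) C)) \<and>
               components ep V (Gs l) = components ep V (Hs l)}" by linarith
    qed
  qed
  show ?thesis using lf1 lfK main by blast
qed


end
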